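(* Let $\mathcal{M}$ be a circular embedding of a connected graph $X$ on a closed orientable surface. Let $U$ be its vertex-face transition matrix, $C$ its vertex-face incidence matrix, and $\widehat C=\widehat N^T\widehat M$. Then the multiplicities of the non-real eigenvalues of $U$ sum to $2\operatorname{rk}(C)-2$. Moreover, let $\mu\in(0,1)$ be an eigenvalue of $\widehat C\widehat C^T$ and choose $\theta$ with $\cos\theta=2\mu-1$. Then: - the map $y\mapsto(\cos\theta+1)\widehat Ny-(e^{i\theta}+1)\widehat M\widehat C^Ty$ is an isomorphism from the $\mu$-eigenspace of $\widehat C\widehat C^T$ onto the $e^{i\theta}$-eigenspace of $U$; - the map $y\mapsto(\cos\theta+1)\widehat Ny-(e^{-i\theta}+1)\widehat M\widehat C^Ty$ is an isomorphism from the $\mu$-eigenspace of $\widehat C\widehat C^T$ onto the $e^{-i\theta}$-eigenspace of $U$.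
   Context: Setting. A circular embedding is a cellular embedding in which every face is bounded by a cycle. Arcs are ordered pairs $(u,v)$ with $\{u,v\}$ an edge, and $u$ is the tail. Consistent orientation. Fix an orientation of the face boundaries such that each edge shared by two faces receives opposite directions in them. Then every arc lies in exactly one facial walk. Matrices. - $M$ is the arc-face incidence matrix ($M_{(a,b),f}=1$ iff $(a,b)$ lies in the facial walk of $f$). - $N$ is the arc-tail incidence matrix ($N_{(a,b),u}=1$ iff $a=u$). - $\widehat M,\widehat N$ are these matrices with columns scaled to unit length. - $U=(2\widehat M\widehat M^T-I)(2\widehat N\widehat N^T-I)$. - $C$ is the vertex-face incidence matrix ($C_{u,f}=1$ iff $u$ lies on $f$), and $C=N^TM$. The eigenvalues of $\widehat C\widehat C^T$ lie in $[0,1]$. *)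

theory Defs
  imports "Jordan_Normal_Form.Jordan_Normal_Form" "Jordan_Normal_Form.DL_Rank"
begin

definition simple_graph :: "'v set \<Rightarrow> ('v \<Rightarrow> 'v \<Rightarrow> bool) \<Rightarrow> bool" where
  "simple_graph V E \<longleftrightarrow> finite V \<and> (\<forall>u v. E u v \<longrightarrow> u \<in> V \<and> v \<in> V)
     \<and> (\<forall>u v. E u v \<longrightarrow> E v u) \<and> (\<forall>u. \<not> E u u)"

definition arcs :: "('v \<Rightarrow> 'v \<Rightarrow> bool) \<Rightarrow> ('v \<times> 'v) set" where
  "arcs E = {(u, v). E u v}"

definition connected_graph :: "'v set \<Rightarrow> ('v \<Rightarrow> 'v \<Rightarrow> bool) \<Rightarrow> bool" where
  "connected_graph V E \<longleftrightarrow> (\<forall>u\<in>V. \<forall>v\<in>V. (u, v) \<in> (arcs E)\<^sup>*)"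

text \<open>Rotation systems of a connected graph are exactly
  (up to equivalence) its cellular embeddings in closed orientable surfaces.\<close>
definition rotation_system :: "('v \<Rightarrow> 'v \<Rightarrow> bool) \<Rightarrow> ('v \<times> 'v \<Rightarrow> 'v \<times> 'v) \<Rightarrow> bool" where
  "rotation_system E \<rho> \<longleftrightarrow> bij_betw \<rho> (arcs E) (arcs E)
     \<and> (\<forall>a\<in>arcs E. fst (\<rho> a) = fst a)
     \<and> (\<forall>a\<in>arcs E. \<forall>b\<in>arcs E. fst a = fst b \<longrightarrow> (\<exists>k. (\<rho> ^^ k) a = b))"

text \<open>Face successor: after traversing arc (u,v), continue with the arc following (v,u)
  in the rotation at v.  Faces (consistently oriented facial walks) are its orbits.\<close>
definition face_next :: "('v \<times> 'v \<Rightarrow> 'v \<times> 'v) \<Rightarrow> 'v \<times> 'v \<Rightarrow> 'v \<times> 'v" where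
  "face_next \<rho> a = \<rho> (snd a, fst a)"

definition face_of :: "('v \<times> 'v \<Rightarrow> 'v \<times> 'v) \<Rightarrow> 'v \<times> 'v \<Rightarrow> ('v \<times> 'v) set" where
  "face_of \<rho> a = {(face_next \<rho> ^^ k) a | k. True}"

definition faces :: "('v \<Rightarrow> 'v \<Rightarrow> bool) \<Rightarrow> ('v \<times> 'v \<Rightarrow> 'v \<times> 'v) \<Rightarrow> ('v \<times> 'v) set set" where
  "faces E \<rho> = face_of \<rho> ` arcs E"

text \<open>Circular: every face is bounded by a cycle, i.e. the facial walk has length at least 3
  and passes through distinct vertices.  (The graph must have an edge: the unique face of the
  embedding of the one-vertex graph is not bounded by a cycle.)\<close>
definition circular :: "('v \<Rightarrow> 'v \<Rightarrow> bool) \<Rightarrow> ('v \<times> 'v \<Rightarrow> 'v \<times> 'v) \<Rightarrow> bool" where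
  "circular E \<rho> \<longleftrightarrow> arcs E \<noteq> {} \<and>
     (\<forall>f\<in>faces E \<rho>. card f \<ge> 3 \<and> inj_on fst f)"

definition arc_face_mat :: "('v \<times> 'v) list \<Rightarrow> ('v \<times> 'v) set list \<Rightarrow> real mat" where
  "arc_face_mat as fs = mat (length as) (length fs) (\<lambda>(i, j). if as ! i \<in> fs ! j then 1 else 0)"

definition arc_tail_mat :: "('v \<times> 'v) list \<Rightarrow> 'v list \<Rightarrow> real mat" where
  "arc_tail_mat as vs = mat (length as) (length vs) (\<lambda>(i, j). if fst (as ! i) = vs ! j then 1 else 0)"

definition vertex_face_mat :: "'v list \<Rightarrow> ('v \<times> 'v) set list \<Rightarrow> real mat" where
  "vertex_face_mat vs fs = mat (length vs) (length fs) (\<lambda>(i, j). if (\<exists>a\<in>fs ! j. fst a = vs ! i) then 1 else 0)"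

definition normalize_cols :: "real mat \<Rightarrow> real mat" where
  "normalize_cols A = mat (dim_row A) (dim_col A)
     (\<lambda>(i, j). A $$ (i, j) / sqrt (\<Sum>k<dim_row A. (A $$ (k, j))\<^sup>2))"

definition cmat :: "real mat \<Rightarrow> complex mat" where
  "cmat A = map_mat complex_of_real A"

definition transition_mat :: "real mat \<Rightarrow> real mat \<Rightarrow> real mat" where
  "transition_mat Mh Nh =
     (2 \<cdot>\<^sub>m (Mh * transpose_mat Mh) - 1\<^sub>m (dim_row Mh)) *
     (2 \<cdot>\<^sub>m (Nh * transpose_mat Nh) - 1\<^sub>m (dim_row Nh))"

definition eigenspace :: "complex mat \<Rightarrow> complex \<Rightarrow> complex vec set" where
  "eigenspace A k = {v \<in> carrier_vec (dim_col A). A *\<^sub>v v = k \<cdot>\<^sub>v v}"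

definition eig_mult :: "complex mat \<Rightarrow> complex \<Rightarrow> nat" where
  "eig_mult A k = Polynomial.order k (char_poly A)"

end

theory Submission
  imports Defs "Jordan_Normal_Form.Jordan_Normal_Form_Uniqueness" "Jordan_Normal_Form.Jordan_Normal_Form_Existence"
begin



lemma kernel_dim_bij:
  fixes A :: "'a::field mat" and B :: "'a mat"
  assumes A: "A \<in> carrier_mat ra ca" and B: "B \<in> carrier_mat rb cb"
    and add: "\<And>x y. x \<in> mat_kernel A \<Longrightarrow> y \<in> mat_kernel A \<Longrightarrow> T (x + y) = T x + T y"
    and smult: "\<And>c x. x \<in> mat_kernel A \<Longrightarrow> T (c \<cdot>\<^sub>v x) = c \<cdot>\<^sub>v T x"
    and bij: "bij_betw T (mat_kernel A) (mat_kernel B)"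
  shows "kernel_dim A = kernel_dim B"
proof -
  interpret KA: kernel ra ca A by (unfold_locales, rule A)
  interpret KB: kernel rb cb B by (unfold_locales, rule B)
  interpret LM: linear_map class_ring KA.VK KB.VK T
    apply (unfold_locales)
    unfolding module_hom_def using bij add smult by (auto simp: bij_betw_def)
  from kernel_basis_exists[OF A] obtain bs where "finite bs" "KA.basis bs" by auto
  hence fd: "KA.Ker.fin_dim" unfolding KA.Ker.fin_dim_def KA.Ker.basis_def by auto
  have "KA.dim = KB.dim"
    by (rule LM.dim_eq[OF fd]) (use bij in \<open>auto simp: bij_betw_def\<close>)
  thus ?thesis using A B by simp
qed


lemma sum_list_min12:
  fixes xs :: "nat list"
  shows "sum_list (map (min 1) xs) \<le> sum_list (map (min 2) xs)"
  by (induct xs) auto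

lemma sum_list_min12_eq:
  fixes xs :: "nat list"
  assumes "\<forall>x\<in>set xs. x > 0" "sum_list (map (min 2) xs) = sum_list (map (min 1) xs)"
  shows "sum_list xs = sum_list (map (min 1) xs)"
  using assms
proof (induct xs)
  case (Cons x xs)
  have "sum_list (map (min 1) xs) \<le> sum_list (map (min 2) xs)" by (rule sum_list_min12)
  moreover have "min 1 x \<le> min 2 x" by simp
  ultimately have "min 2 x = min 1 x" "sum_list (map (min 2) xs) = sum_list (map (min 1) xs)"
    using Cons(3) by auto
  with Cons show ?case by auto
qed simp

lemma kernel_dim_cong:
  assumes "mat_kernel A = mat_kernel B" "dim_col A = dim_col B"
  shows "kernel_dim A = kernel_dim B"
  using assms unfolding kernel_dim_def by simp

lemma order_char_poly_eq_kernel_dim: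
  fixes A :: "complex mat"
  assumes A: "A \<in> carrier_mat n n"
    and sub: "mat_kernel (char_matrix A ev * char_matrix A ev) \<subseteq> mat_kernel (char_matrix A ev)"
  shows "Polynomial.order ev (char_poly A) = kernel_dim (char_matrix A ev)"
proof -
  obtain as where "char_poly A = (\<Prod>a\<leftarrow>as. [:-a,1:])" using char_poly_factorized[OF A] by blast
  from jordan_nf_exists[OF A this] obtain n_as where jnf: "jordan_nf A n_as" by auto
  let ?CM = "char_matrix A ev"
  have CM: "?CM \<in> carrier_mat n n" using A by simp
  have k1: "?CM ^\<^sub>m 1 = ?CM" using CM by simp
  have k2: "?CM ^\<^sub>m 2 = ?CM * ?CM" using CM by (simp add: numeral_2_eq_2)
  have "mat_kernel (?CM ^\<^sub>m 2) = mat_kernel ?CM" 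
    unfolding k2 using sub mat_kernel_mult_subset[OF CM CM] by auto
  hence eq: "dim_gen_eigenspace A ev 2 = dim_gen_eigenspace A ev 1"
    unfolding dim_gen_eigenspace_def k1 using CM by (intro kernel_dim_cong) (auto simp: k2)
  let ?xs = "map fst [(n, e)\<leftarrow>n_as . e = ev]"
  have xs: "?xs = map fst (filter (\<lambda>na. snd na = ev) n_as)"
    by (induct n_as) auto
  have pos: "\<forall>x\<in>set ?xs. x > 0" using jnf unfolding jordan_nf_def by force
  from eq[unfolded dim_gen_eigenspace[OF jnf]]
  have "sum_list (map (min 2) ?xs) = sum_list (map (min 1) ?xs)"
    by (simp add: o_def)
  from sum_list_min12_eq[OF pos this]
  have "sum_list ?xs = sum_list (map (min 1) ?xs)" .
  also have "\<dots> = dim_gen_eigenspace A ev 1" unfolding dim_gen_eigenspace[OF jnf]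
    by (simp add: o_def)
  also have "\<dots> = kernel_dim ?CM" unfolding dim_gen_eigenspace_def k1 ..
  finally show ?thesis unfolding jordan_nf_order[OF jnf] xs .
qed

lemma cscalar_smult_right:
  fixes v w :: "complex vec"
  assumes "v \<in> carrier_vec n" "w \<in> carrier_vec n"
  shows "w \<bullet>c (c \<cdot>\<^sub>v v) = cnj c * (w \<bullet>c v)"
  using assms unfolding scalar_prod_def
  by (simp add: sum_distrib_left ac_simps)

lemma normal_kernel_sq:
  fixes A B :: "complex mat"
  assumes A: "A \<in> carrier_mat n n" and B: "B \<in> carrier_mat n n"
   and adj: "\<And>v w. v \<in> carrier_vec n \<Longrightarrow> w \<in> carrier_vec n \<Longrightarrow> (A *\<^sub>v v) \<bullet>c w = v \<bullet>c (B *\<^sub>v w)"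
   and ev: "\<And>v. v \<in> carrier_vec n \<Longrightarrow> A *\<^sub>v v = ev \<cdot>\<^sub>v v \<Longrightarrow> B *\<^sub>v v = cnj ev \<cdot>\<^sub>v v"
  shows "mat_kernel (char_matrix A ev * char_matrix A ev) \<subseteq> mat_kernel (char_matrix A ev)"
proof
  fix w assume w: "w \<in> mat_kernel (char_matrix A ev * char_matrix A ev)"
  let ?CM = "char_matrix A ev"
  have CM: "?CM \<in> carrier_mat n n" using A by simp
  have cmv: "\<And>x. x \<in> carrier_vec n \<Longrightarrow> ?CM *\<^sub>v x = A *\<^sub>v x - ev \<cdot>\<^sub>v x"
    using A unfolding char_matrix_def
    by (intro eq_vecI) (auto simp: scalar_prod_def sum.distrib algebra_simps if_distrib[of "\<lambda>t. _ * t"] cong: if_cong)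
  from w CM have wc: "w \<in> carrier_vec n" and w0: "(?CM * ?CM) *\<^sub>v w = 0\<^sub>v n"
    unfolding mat_kernel_def by auto
  define v where "v = ?CM *\<^sub>v w"
  have vc: "v \<in> carrier_vec n" using CM wc unfolding v_def by simp
  have "?CM *\<^sub>v v = 0\<^sub>v n" unfolding v_def using w0 CM wc
    by (simp add: assoc_mult_mat_vec)
  hence Av: "A *\<^sub>v v = ev \<cdot>\<^sub>v v"
  proof -
    assume h: "?CM *\<^sub>v v = 0\<^sub>v n"
    have h': "A *\<^sub>v v - ev \<cdot>\<^sub>v v = 0\<^sub>v n" using h cmv[OF vc] by simp
    have "(A *\<^sub>v v) $ i - ev * v $ i = 0" if i: "i < n" for i
      using arg_cong[OF h', of "\<lambda>x. x $ i"] A vc i by simp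
    thus ?thesis using A vc by (intro eq_vecI) auto
  qed
  have "v \<bullet>c v = (A *\<^sub>v w - ev \<cdot>\<^sub>v w) \<bullet>c v" unfolding v_def cmv[OF wc] ..
  also have "\<dots> = (A *\<^sub>v w) \<bullet>c v - ev * (w \<bullet>c v)"
    using A wc vc unfolding scalar_prod_def
    by (simp add: sum_subtractf sum_distrib_left algebra_simps)
  also have "(A *\<^sub>v w) \<bullet>c v = w \<bullet>c (cnj ev \<cdot>\<^sub>v v)" using adj[OF wc vc] ev[OF vc Av] by simp
  also have "\<dots> = ev * (w \<bullet>c v)" using cscalar_smult_right[OF vc wc] by simp
  finally have "v \<bullet>c v = 0" by simp
  hence "v = 0\<^sub>v n" using conjugate_square_eq_0_vec[OF vc] by simp
  thus "w \<in> mat_kernel ?CM" unfolding v_def mat_kernel_def using wc CM by auto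
qed


lemma prod_linear_nz: "(\<Prod>b\<leftarrow>as. [:-b,1:]) \<noteq> (0 :: complex poly)"
  unfolding prod_list_zero_iff by auto

lemma order_prod_linear:
  fixes as :: "complex list"
  shows "Polynomial.order a (\<Prod>b\<leftarrow>as. [:-b,1:]) = count_list as a"
proof (induct as)
  case (Cons b as)
  have "Polynomial.order a (\<Prod>b\<leftarrow>b#as. [:-b,1:]) = Polynomial.order a ([:-b,1:] * (\<Prod>b\<leftarrow>as. [:-b,1:]))"
    by simp
  also have "\<dots> = Polynomial.order a [:-b,1:] + Polynomial.order a (\<Prod>b\<leftarrow>as. [:-b,1:])"
    using prod_linear_nz[of "b#as"] by (intro order_mult) simp
  also have "\<dots> = (if a = b then 1 else 0) + count_list as a"
    using Cons order_linear'[of a "-b"] by auto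
  finally show ?case by simp
qed (simp add: order_0I)

lemma sum_order_eigenvalues:
  fixes A :: "complex mat"
  assumes A: "A \<in> carrier_mat n n"
  shows "finite {a. eigenvalue A a}"
    "(\<Sum>a\<in>{a. eigenvalue A a}. Polynomial.order a (char_poly A)) = n"
proof -
  obtain as where cp: "char_poly A = (\<Prod>a\<leftarrow>as. [:-a,1:])" and len: "length as = n"
    using char_poly_factorized[OF A] by blast
  have S: "{a. eigenvalue A a} = set as"
  proof -
    have "eigenvalue A a \<longleftrightarrow> a \<in> set as" for a
      unfolding eigenvalue_root_char_poly[OF A] cp poly_prod_list_zero_iff by auto
    thus ?thesis by auto
  qed
  show "finite {a. eigenvalue A a}" unfolding S by simp
  show "(\<Sum>a\<in>{a. eigenvalue A a}. Polynomial.order a (char_poly A)) = n"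
    unfolding S cp order_prod_linear using sum_count_set[of as "set as"] len by simp
qed


lemma kernel_dim_cmat:
  fixes A :: "real mat"
  assumes A: "A \<in> carrier_mat nr nc"
  shows "kernel_dim (map_mat complex_of_real A) = kernel_dim A"
proof -
  let ?h = "map_mat complex_of_real"
  obtain C where gj: "gauss_jordan_single A = C" by auto
  note g = gauss_jordan_single[OF A gj]
  from g(4) obtain P Q where CPA: "C = P * A" and P: "P \<in> carrier_mat nr nr"
    and Q: "Q \<in> carrier_mat nr nr" and QP: "Q * P = 1\<^sub>m nr" by auto
  have C: "C \<in> carrier_mat nr nc" by (rule g(2))
  have hC: "?h C = ?h P * ?h A" unfolding CPA by (rule of_real_hom.mat_hom_mult[OF P A])
  have hQP: "?h Q * ?h P = 1\<^sub>m nr"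
    by (metis QP P Q of_real_hom.mat_hom_mult of_real_hom.mat_hom_one)
  have k1: "mat_kernel (?h C) = mat_kernel (?h A)" unfolding hC
    by (rule mat_kernel_mult_eq) (use A P Q hQP in auto)
  from g(3) obtain f where pf: "pivot_fun C f nc" unfolding row_echelon_form_def using C by auto
  have "pivot_fun (?h C) f nc" using pf C unfolding pivot_fun_def Let_def by auto
  hence ref: "row_echelon_form (?h C)" unfolding row_echelon_form_def using C by auto
  have hCc: "?h C \<in> carrier_mat nr nc" using C by simp
  have rows: "{i. i < nr \<and> row (?h C) i \<noteq> 0\<^sub>v nc} = {i. i < nr \<and> row C i \<noteq> 0\<^sub>v nc}"
  proof -
    have "i < nr \<Longrightarrow> row (?h C) i = map_vec complex_of_real (row C i)" for i
      using C by (intro eq_vecI) auto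
    thus ?thesis using of_real_hom.vec_hom_zero_iff by auto
  qed
  have "kernel_dim (?h A) = kernel_dim (?h C)" using k1 A C by (intro kernel_dim_cong) auto
  also have "\<dots> = nc - card {i. i < nr \<and> row C i \<noteq> 0\<^sub>v nc}"
    using find_base_vectors(6)[OF ref hCc] hCc unfolding rows kernel_dim_def by simp
  also have "\<dots> = kernel_dim C"
    using find_base_vectors(6)[OF g(3) C] C unfolding kernel_dim_def by simp
  also have "\<dots> = kernel_dim A"
    using mat_kernel_mult_eq[OF A P Q QP] A C unfolding CPA[symmetric] by (intro kernel_dim_cong) auto
  finally show ?thesis .
qed


lemma rank_nullity_mat:
  fixes A :: "'a::field mat"
  assumes A: "A \<in> carrier_mat nr nc"
  shows "vec_space.rank nr A + kernel_dim A = nc"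
proof -
  interpret V: vec_space "TYPE('a)" nc .
  interpret W: vec_space "TYPE('a)" nr .
  interpret LM: linear_map class_ring V.V W.V "\<lambda>v. A *\<^sub>v v"
    apply unfold_locales
    unfolding module_hom_def using A by (auto simp: mult_add_distrib_mat_vec mult_mat_vec)
  have im: "LM.imT = W.span (set (cols A))"
  proof -
    have cs: "set (cols A) \<subseteq> carrier_vec nr" using A by (auto simp: cols_def)
    have "W.span (set (cols A)) = W.span_list (cols A)" using W.span_list_as_span[OF cs] by simp
    also have "\<dots> = (\<lambda>v. A *\<^sub>v v) ` carrier_vec nc"
    proof -
      have "W.lincomb_list c (cols A) = A *\<^sub>v vec nc c" for c
      proof -
        have "\<forall>w\<in>set (cols A). dim_vec w = nr" using cs by auto
        from W.lincomb_list_as_mat_mult[OF this, of c]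
        show ?thesis using mat_of_cols_cols[of A] A by auto
      qed
      moreover have "v \<in> carrier_vec nc \<Longrightarrow> \<exists>c. v = vec nc c" for v :: "'a vec"
        by (rule exI[of _ "\<lambda>i. v $ i"]) auto
      ultimately show ?thesis unfolding W.span_list_def using A
        by (auto simp: class_ring_simps)
    qed
    finally show ?thesis unfolding LM.im_def by simp
  qed
  have ker: "LM.kerT = mat_kernel A"
    unfolding LM.ker_def mat_kernel_def using A by auto
  from LM.rank_nullity[OF V.fin_dim]
  show ?thesis unfolding im ker V.dim_is_n W.rank_def kernel_dim_def using A by simp
qed


lemma lin2:
  fixes M :: "complex mat"
  assumes "M \<in> carrier_mat r c" "u \<in> carrier_vec c" "w \<in> carrier_vec c"
  shows "M *\<^sub>v (a \<cdot>\<^sub>v u + b \<cdot>\<^sub>v w) = a \<cdot>\<^sub>v (M *\<^sub>v u) + b \<cdot>\<^sub>v (M *\<^sub>v w)"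
  using assms by (simp add: mult_add_distrib_mat_vec mult_mat_vec)

lemma alg1:
  fixes lam mu s q w :: complex
  assumes "lam \<noteq> 1" "lam + 1 \<noteq> 0" "mu \<noteq> 0" "(lam+1)^2 = 4*lam*mu"
    "4*s - 2*(2/(lam+1)*s) - 2*q + w = lam*w"
  shows "2*mu * (-1/(mu*(lam-1))) * q - (lam+1) * ((-1/(mu*(lam-1))) * s) = w"
proof -
  have l1: "lam - 1 \<noteq> 0" using assms(1) by simp
  have d: "mu * (lam - 1) \<noteq> 0" using l1 assms(3) by simp
  from assms(5) have "w * (lam - 1) = 4*s - 4/(lam+1)*s - 2*q" by (simp add: algebra_simps)
  hence w: "w = (4*s - 4/(lam+1)*s - 2*q) / (lam - 1)" using l1 by (simp add: field_simps)
  have "4*s - 4/(lam+1)*s = (4*lam/(lam+1)) * s" using assms(2) by (simp add: field_simps)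
  also have "4*lam/(lam+1) = (lam+1)/mu" using assms(2,3,4) by (simp add: field_simps power2_eq_square)
  finally have w2: "w = ((lam+1)/mu * s - 2*q) / (lam - 1)" unfolding w by simp
  have e1: "2*mu * (-1/(mu*(lam-1))) * q - (lam+1) * ((-1/(mu*(lam-1))) * s) = ((lam+1)*s - 2*mu*q) / (mu*(lam-1))"
    by (simp add: divide_simps)
  have e2: "((lam+1)*s - 2*mu*q) / (mu*(lam-1)) = ((lam+1)/mu * s - 2*q) / (lam - 1)"
    using assms(3) by (simp add: divide_simps)
  show ?thesis unfolding e1 e2 w2 ..
qed

lemma part2_abstract:
  fixes A B U K ChT :: "complex mat" and mu lam c1 :: complex
  assumes A: "A \<in> carrier_mat m f" and B: "B \<in> carrier_mat m n"
   and AtA: "transpose_mat A * A = 1\<^sub>m f" and BtB: "transpose_mat B * B = 1\<^sub>m n"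
   and U: "U \<in> carrier_mat m m"
   and Uv: "\<And>v. v \<in> carrier_vec m \<Longrightarrow> U *\<^sub>v v = 2 \<cdot>\<^sub>v (A *\<^sub>v (transpose_mat A *\<^sub>v (2 \<cdot>\<^sub>v (B *\<^sub>v (transpose_mat B *\<^sub>v v)) - v))) - (2 \<cdot>\<^sub>v (B *\<^sub>v (transpose_mat B *\<^sub>v v)) - v)"
   and K: "K \<in> carrier_mat n n"
   and Kv: "\<And>y. y \<in> carrier_vec n \<Longrightarrow> K *\<^sub>v y = transpose_mat B *\<^sub>v (A *\<^sub>v (transpose_mat A *\<^sub>v (B *\<^sub>v y)))"
   and ChT: "ChT \<in> carrier_mat f n"
   and ChTv: "\<And>y. y \<in> carrier_vec n \<Longrightarrow> ChT *\<^sub>v y = transpose_mat A *\<^sub>v (B *\<^sub>v y)"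
   and quad: "lam^2 + (2 - 4*mu)*lam + 1 = 0" and mu0: "mu \<noteq> 0" and lam1: "lam \<noteq> 1"
   and c1: "c1 = 2*mu"
  shows "bij_betw (\<lambda>y. c1 \<cdot>\<^sub>v (B *\<^sub>v y) - (lam + 1) \<cdot>\<^sub>v (A *\<^sub>v (ChT *\<^sub>v y)))
           (eigenspace K mu) (eigenspace U lam)"
proof -
  define At where "At = transpose_mat A"
  define Bt where "Bt = transpose_mat B"
  have At: "At \<in> carrier_mat f m" and Bt: "Bt \<in> carrier_mat n m" unfolding At_def Bt_def using A B by auto
  have BtBv: "Bt *\<^sub>v (B *\<^sub>v y) = y" if "y \<in> carrier_vec n" for y
    using assoc_mult_mat_vec[OF Bt B that] BtB that unfolding Bt_def by simp
  have AtAv: "At *\<^sub>v (A *\<^sub>v z) = z" if "z \<in> carrier_vec f" for z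
    using assoc_mult_mat_vec[OF At A that] AtA that unfolding At_def by simp
  define P where "P v = A *\<^sub>v (At *\<^sub>v v)" for v
  define Q where "Q v = B *\<^sub>v (Bt *\<^sub>v v)" for v
  have Pc[simp]: "P v \<in> carrier_vec m" for v
    unfolding P_def carrier_dim_vec using A by simp
  have Qc[simp]: "Q v \<in> carrier_vec m" for v
    unfolding Q_def carrier_dim_vec using B by simp
  have Pd[simp]: "dim_vec (P v) = m" for v using Pc[of v] by (simp only: carrier_dim_vec)
  have Qd[simp]: "dim_vec (Q v) = m" for v using Qc[of v] by (simp only: carrier_dim_vec)
  have PP: "P (P v) = P v" if "v \<in> carrier_vec m" for v
    unfolding P_def using AtAv[of "At *\<^sub>v v"] At that by simp
  have QQ: "Q (Q v) = Q v" if "v \<in> carrier_vec m" for v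
    unfolding Q_def using BtBv[of "Bt *\<^sub>v v"] Bt that by simp
  have Plin: "P (a \<cdot>\<^sub>v u + b \<cdot>\<^sub>v w) = a \<cdot>\<^sub>v P u + b \<cdot>\<^sub>v P w"
    if "u \<in> carrier_vec m" "w \<in> carrier_vec m" for a b u w
    unfolding P_def using lin2[OF At that] lin2[OF A, of "At *\<^sub>v u" "At *\<^sub>v w"] At that by simp
  have Qlin: "Q (a \<cdot>\<^sub>v u + b \<cdot>\<^sub>v w) = a \<cdot>\<^sub>v Q u + b \<cdot>\<^sub>v Q w"
    if "u \<in> carrier_vec m" "w \<in> carrier_vec m" for a b u w
    unfolding Q_def using lin2[OF Bt that] lin2[OF B, of "Bt *\<^sub>v u" "Bt *\<^sub>v w"] Bt that by simp
  have Psm: "P (a \<cdot>\<^sub>v u) = a \<cdot>\<^sub>v P u" if "u \<in> carrier_vec m" for a u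
    unfolding P_def using At A that by (simp add: mult_mat_vec)
  have Qsm: "Q (a \<cdot>\<^sub>v u) = a \<cdot>\<^sub>v Q u" if "u \<in> carrier_vec m" for a u
    unfolding Q_def using Bt B that by (simp add: mult_mat_vec)
  have Uv': "U *\<^sub>v v = 4 \<cdot>\<^sub>v P (Q v) + (-2) \<cdot>\<^sub>v P v + (-2) \<cdot>\<^sub>v Q v + v"
    if v: "v \<in> carrier_vec m" for v
  proof -
    have e: "2 \<cdot>\<^sub>v Q v - v = 2 \<cdot>\<^sub>v Q v + (-1) \<cdot>\<^sub>v v" using v by (intro eq_vecI) auto
    have "U *\<^sub>v v = 2 \<cdot>\<^sub>v P (2 \<cdot>\<^sub>v Q v + (-1) \<cdot>\<^sub>v v) - (2 \<cdot>\<^sub>v Q v + (-1) \<cdot>\<^sub>v v)"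
      using Uv[OF v] e unfolding P_def Q_def At_def Bt_def by simp
    also have "P (2 \<cdot>\<^sub>v Q v + (-1) \<cdot>\<^sub>v v) = 2 \<cdot>\<^sub>v P (Q v) + (-1) \<cdot>\<^sub>v P v" using Plin v by simp
    also have "2 \<cdot>\<^sub>v (2 \<cdot>\<^sub>v P (Q v) + (-1) \<cdot>\<^sub>v P v) - (2 \<cdot>\<^sub>v Q v + (-1) \<cdot>\<^sub>v v) = 4 \<cdot>\<^sub>v P (Q v) + (-2) \<cdot>\<^sub>v P v + (-2) \<cdot>\<^sub>v Q v + v"
      using carrier_vecD[OF v] by (intro eq_vecI) (simp_all add: algebra_simps)
    finally show ?thesis .
  qed

  have lam0: "lam \<noteq> 0" using quad by auto
  have key: "(lam+1)^2 = 4*lam*mu"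
  proof -
    have "(lam+1)^2 = (lam^2 + (2 - 4*mu)*lam + 1) + 4*lam*mu" by (simp add: power2_eq_square algebra_simps)
    thus ?thesis using quad by simp
  qed
  have lamm1: "lam + 1 \<noteq> 0"
  proof
    assume "lam + 1 = 0"
    with key have "4*lam*mu = 0" by simp
    with lam0 mu0 show False by simp
  qed
  define F where "F y = c1 \<cdot>\<^sub>v (B *\<^sub>v y) - (lam + 1) \<cdot>\<^sub>v (A *\<^sub>v (ChT *\<^sub>v y))" for y
  have eigK: "y \<in> eigenspace K mu \<longleftrightarrow> y \<in> carrier_vec n \<and> K *\<^sub>v y = mu \<cdot>\<^sub>v y" for y
    unfolding eigenspace_def using K by auto
  have eigU: "w \<in> eigenspace U lam \<longleftrightarrow> w \<in> carrier_vec m \<and> U *\<^sub>v w = lam \<cdot>\<^sub>v w" for w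
    unfolding eigenspace_def using U by auto
  have into: "F y \<in> carrier_vec m \<and> U *\<^sub>v F y = lam \<cdot>\<^sub>v F y \<and> Bt *\<^sub>v F y = (mu * (1 - lam)) \<cdot>\<^sub>v y"
    if y: "y \<in> carrier_vec n" and Ky: "K *\<^sub>v y = mu \<cdot>\<^sub>v y" for y
  proof -
    define x where "x = B *\<^sub>v y"
    have xc: "x \<in> carrier_vec m" using B y by (simp add: x_def)
    have p: "A *\<^sub>v (ChT *\<^sub>v y) = P x" unfolding P_def x_def At_def using ChTv[OF y] by simp
    have Btx: "Bt *\<^sub>v x = y" unfolding x_def using BtBv[OF y] .
    have Qx: "Q x = x" unfolding Q_def using Btx by (simp add: x_def)
    have Btp: "Bt *\<^sub>v P x = mu \<cdot>\<^sub>v y" unfolding P_def x_def Bt_def At_def using Kv[OF y] Ky by simp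
    have Qp: "Q (P x) = mu \<cdot>\<^sub>v x"
    proof -
      have "Q (P x) = B *\<^sub>v (Bt *\<^sub>v P x)" by (simp add: Q_def)
      also have "\<dots> = B *\<^sub>v (mu \<cdot>\<^sub>v y)" using Btp by simp
      also have "\<dots> = mu \<cdot>\<^sub>v x" using B y by (simp add: mult_mat_vec x_def)
      finally show ?thesis .
    qed
    have Pp: "P (P x) = P x" using PP xc .
    have Fy: "F y = c1 \<cdot>\<^sub>v x + (-(lam+1)) \<cdot>\<^sub>v P x" unfolding F_def p x_def[symmetric]
      using carrier_vecD[OF xc] by (intro eq_vecI) (simp_all add: algebra_simps)
    have FyC: "F y \<in> carrier_vec m" unfolding Fy using xc by simp
    have QF: "Q (F y) = (c1 - (lam+1)*mu) \<cdot>\<^sub>v x" unfolding Fy Qlin[OF xc Pc] Qx Qp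
      using carrier_vecD[OF xc] by (intro eq_vecI) (simp_all add: algebra_simps)
    have PF: "P (F y) = (c1 - (lam+1)) \<cdot>\<^sub>v P x" unfolding Fy Plin[OF xc Pc] Pp
      using carrier_vecD[OF xc] by (intro eq_vecI) (simp_all add: algebra_simps)
    have PQF: "P (Q (F y)) = (c1 - (lam+1)*mu) \<cdot>\<^sub>v P x" unfolding QF using Psm[OF xc] .
    have e: "4 * ((c1 - (lam + 1) * mu) * a) - 2 * ((c1 - (lam + 1)) * a) - 2 * ((c1 - (lam + 1) * mu) * b)
          + (c1 * b + (- lam - 1) * a) = lam * (c1 * b + (- lam - 1) * a)" for a b :: complex
    proof -
      have "4 * ((c1 - (lam + 1) * mu) * a) - 2 * ((c1 - (lam + 1)) * a) - 2 * ((c1 - (lam + 1) * mu) * b)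
          + (c1 * b + (- lam - 1) * a) = lam * (c1 * b + (- lam - 1) * a) + ((lam+1)^2 - 4*lam*mu) * a"
        unfolding c1 by (simp add: power2_eq_square algebra_simps)
      thus ?thesis using key by simp
    qed
    have "U *\<^sub>v F y = 4 \<cdot>\<^sub>v ((c1 - (lam+1)*mu) \<cdot>\<^sub>v P x) + (-2) \<cdot>\<^sub>v ((c1 - (lam+1)) \<cdot>\<^sub>v P x) + (-2) \<cdot>\<^sub>v ((c1 - (lam+1)*mu) \<cdot>\<^sub>v x) + F y"
      using Uv'[OF FyC] unfolding PQF PF QF Psm[OF xc] .
    also have "\<dots> = lam \<cdot>\<^sub>v F y" unfolding Fy using carrier_vecD[OF xc]
      by (intro eq_vecI) (simp_all add: e)
    finally have "U *\<^sub>v F y = lam \<cdot>\<^sub>v F y" .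
    moreover have "Bt *\<^sub>v F y = (mu * (1 - lam)) \<cdot>\<^sub>v y"
    proof -
      have "Bt *\<^sub>v F y = c1 \<cdot>\<^sub>v (Bt *\<^sub>v x) + (-(lam+1)) \<cdot>\<^sub>v (Bt *\<^sub>v P x)"
        unfolding Fy by (rule lin2[OF Bt xc Pc])
      also have "\<dots> = (mu * (1 - lam)) \<cdot>\<^sub>v y" unfolding Btx Btp
        using carrier_vecD[OF y] c1 by (intro eq_vecI) (simp_all add: algebra_simps)
      finally show ?thesis .
    qed
    ultimately show ?thesis using FyC by simp
  qed

  have Padd: "P (u + v) = P u + P v" if "u \<in> carrier_vec m" "v \<in> carrier_vec m" for u v
    unfolding P_def using A At that by (simp add: mult_add_distrib_mat_vec)
  have Qadd: "Q (u + v) = Q u + Q v" if "u \<in> carrier_vec m" "v \<in> carrier_vec m" for u v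
    unfolding Q_def using B Bt that by (simp add: mult_add_distrib_mat_vec)
  have inj: "inj_on F (eigenspace K mu)"
  proof (rule inj_onI)
    fix y1 y2 assume y1: "y1 \<in> eigenspace K mu" and y2: "y2 \<in> eigenspace K mu" and eq: "F y1 = F y2"
    from y1 y2 have y1c: "y1 \<in> carrier_vec n" and y2c: "y2 \<in> carrier_vec n"
      and K1: "K *\<^sub>v y1 = mu \<cdot>\<^sub>v y1" and K2: "K *\<^sub>v y2 = mu \<cdot>\<^sub>v y2" unfolding eigK by auto
    have "(mu * (1 - lam)) \<cdot>\<^sub>v y1 = (mu * (1 - lam)) \<cdot>\<^sub>v y2"
      using into[OF y1c K1] into[OF y2c K2] eq by simp
    moreover have "mu * (1 - lam) \<noteq> 0" using mu0 lam1 by simp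
    ultimately show "y1 = y2" using y1c y2c
      by (metis smult_smult_assoc one_smult_vec divide_self_if times_divide_eq_left nonzero_divide_eq_eq)
  qed
  have sub1: "F ` eigenspace K mu \<subseteq> eigenspace U lam"
    using into by (auto simp: eigK eigU)
  have sub2: "eigenspace U lam \<subseteq> F ` eigenspace K mu"
  proof
    fix w assume "w \<in> eigenspace U lam"
    hence wc: "w \<in> carrier_vec m" and Uw: "U *\<^sub>v w = lam \<cdot>\<^sub>v w" unfolding eigU by auto
    define q where "q = Q w"
    define r where "r = P w"
    define s where "s = P q"
    have qc: "q \<in> carrier_vec m" and rc: "r \<in> carrier_vec m" and sc: "s \<in> carrier_vec m"
      unfolding q_def r_def s_def by simp_all
    have dims: "dim_vec s = m" "dim_vec r = m" "dim_vec q = m" "dim_vec w = m"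
      using qc rc sc wc by auto
    have E1: "4 \<cdot>\<^sub>v s + (-2) \<cdot>\<^sub>v r + (-2) \<cdot>\<^sub>v q + w = lam \<cdot>\<^sub>v w"
      using Uv'[OF wc] Uw unfolding q_def r_def s_def by simp
    have Ps: "P s = s" unfolding s_def using PP[OF qc] .
    have Pr: "P r = r" unfolding r_def using PP[OF wc] .
    have Qq: "Q q = q" unfolding q_def using QQ[OF wc] .
    have PE1: "P (4 \<cdot>\<^sub>v s + (-2) \<cdot>\<^sub>v r + (-2) \<cdot>\<^sub>v q + w) = 4 \<cdot>\<^sub>v s + (-2) \<cdot>\<^sub>v r + (-2) \<cdot>\<^sub>v s + r"
      using wc qc rc sc by (simp add: Padd Psm Ps Pr flip: s_def r_def)
    have PE1': "P (lam \<cdot>\<^sub>v w) = lam \<cdot>\<^sub>v r" using Psm[OF wc] r_def by simp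
    have rs: "r = (2/(lam+1)) \<cdot>\<^sub>v s"
    proof (rule eq_vecI)
      fix i assume "i < dim_vec ((2/(lam+1)) \<cdot>\<^sub>v s)"
      hence i: "i < m" using sc by simp
      have "(4 \<cdot>\<^sub>v s + (-2) \<cdot>\<^sub>v r + (-2) \<cdot>\<^sub>v s + r) $ i = (lam \<cdot>\<^sub>v r) $ i"
        using PE1 PE1' E1 by simp
      hence "2 * s $ i = (lam + 1) * r $ i" using i dims by (simp add: algebra_simps)
      thus "r $ i = ((2/(lam+1)) \<cdot>\<^sub>v s) $ i" using i lamm1 dims by (simp add: field_simps)
    qed (simp add: dims)
    have QE1: "Q (4 \<cdot>\<^sub>v s + (-2) \<cdot>\<^sub>v r + (-2) \<cdot>\<^sub>v q + w) = 4 \<cdot>\<^sub>v Q s + ((-2) \<cdot>\<^sub>v ((2/(lam+1)) \<cdot>\<^sub>v Q s) + ((-2) \<cdot>\<^sub>v q + q))"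
      using wc qc rc sc by (simp add: Qadd Qsm Qq rs flip: q_def)
    have QE1': "Q (lam \<cdot>\<^sub>v w) = lam \<cdot>\<^sub>v q" using Qsm[OF wc] q_def by simp
    have Qs: "Q s = mu \<cdot>\<^sub>v q"
    proof (rule eq_vecI)
      fix i assume "i < dim_vec (mu \<cdot>\<^sub>v q)"
      hence i: "i < m" using qc by simp
      have "(4 \<cdot>\<^sub>v Q s + ((-2) \<cdot>\<^sub>v ((2/(lam+1)) \<cdot>\<^sub>v Q s) + ((-2) \<cdot>\<^sub>v q + q))) $ i = (lam \<cdot>\<^sub>v q) $ i"
        using QE1 QE1' E1 by simp
      hence "4 * Q s $ i - 4/(lam+1) * Q s $ i = (lam + 1) * q $ i" using i dims by (simp add: algebra_simps)
      hence "(4*lam/(lam+1)) * Q s $ i = (lam + 1) * q $ i" using lamm1 by (simp add: field_simps)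
      hence "(4*lam) * Q s $ i = (lam + 1)^2 * q $ i" using lamm1 by (simp add: field_simps power2_eq_square)
      hence "(4*lam) * Q s $ i = (4*lam) * (mu * q $ i)" unfolding key by simp
      thus "Q s $ i = (mu \<cdot>\<^sub>v q) $ i" using i lam0 dims by simp
    qed (simp add: dims)
    define c where "c = -1/(mu*(lam-1))"
    define y where "y = c \<cdot>\<^sub>v (Bt *\<^sub>v w)"
    have yc: "y \<in> carrier_vec n" unfolding y_def using Bt wc by simp
    have By: "B *\<^sub>v y = c \<cdot>\<^sub>v q" unfolding y_def q_def Q_def using B Bt wc by (simp add: mult_mat_vec)
    have Py: "A *\<^sub>v (At *\<^sub>v (B *\<^sub>v y)) = c \<cdot>\<^sub>v s" unfolding By using Psm[OF qc] unfolding P_def s_def .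
    have Bts: "Bt *\<^sub>v s = mu \<cdot>\<^sub>v (Bt *\<^sub>v w)"
    proof -
      have "Bt *\<^sub>v s = Bt *\<^sub>v Q s" unfolding Q_def using BtBv[of "Bt *\<^sub>v s"] Bt sc by simp
      also have "\<dots> = mu \<cdot>\<^sub>v (Bt *\<^sub>v q)" unfolding Qs using Bt qc by (simp add: mult_mat_vec)
      also have "Bt *\<^sub>v q = Bt *\<^sub>v w" unfolding q_def Q_def using BtBv[of "Bt *\<^sub>v w"] Bt wc by simp
      finally show ?thesis .
    qed
    have Ky: "K *\<^sub>v y = mu \<cdot>\<^sub>v y"
    proof -
      have "K *\<^sub>v y = Bt *\<^sub>v (c \<cdot>\<^sub>v s)" using Kv[OF yc] Py unfolding Bt_def At_def by simp
      also have "\<dots> = c \<cdot>\<^sub>v (mu \<cdot>\<^sub>v (Bt *\<^sub>v w))" using Bt sc Bts by (simp add: mult_mat_vec)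
      also have "\<dots> = mu \<cdot>\<^sub>v y" unfolding y_def by (simp add: smult_smult_assoc mult.commute)
      finally show ?thesis .
    qed
    have Fy: "F y = w"
    proof -
      have "F y = c1 \<cdot>\<^sub>v (c \<cdot>\<^sub>v q) - (lam + 1) \<cdot>\<^sub>v (c \<cdot>\<^sub>v s)"
        unfolding F_def By using Py ChTv[OF yc] unfolding At_def by simp
      also have "\<dots> = w"
      proof (rule eq_vecI)
        fix i assume "i < dim_vec w"
        hence i: "i < m" using wc by simp
        have "(4 \<cdot>\<^sub>v s + (-2) \<cdot>\<^sub>v r + (-2) \<cdot>\<^sub>v q + w) $ i = (lam \<cdot>\<^sub>v w) $ i" using E1 by simp
        hence "4 * s $ i - 2 * (2/(lam+1) * s $ i) - 2 * q $ i + w $ i = lam * w $ i"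
          using i dims unfolding rs by simp
        from alg1[OF lam1 lamm1 mu0 key this]
        have A1: "2*mu*c*q $ i - (lam+1)*(c*s $ i) = w $ i" unfolding c_def .
        have "(c1 \<cdot>\<^sub>v (c \<cdot>\<^sub>v q) - (lam + 1) \<cdot>\<^sub>v (c \<cdot>\<^sub>v s)) $ i = c1*(c*q $ i) - (lam+1)*(c*s $ i)"
          using i dims by simp
        thus "(c1 \<cdot>\<^sub>v (c \<cdot>\<^sub>v q) - (lam + 1) \<cdot>\<^sub>v (c \<cdot>\<^sub>v s)) $ i = w $ i"
          using A1 unfolding c1 by (simp add: mult.assoc)
      qed (use wc dims in simp)
      finally show ?thesis .
    qed
    show "w \<in> F ` eigenspace K mu" using Fy yc Ky by (auto simp: eigK)
  qed
  show ?thesis unfolding bij_betw_def F_def[symmetric] using inj sub1 sub2 by auto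
qed


lemma mat_kernel_char_matrix:
  fixes A :: "'a::field mat"
  assumes A: "A \<in> carrier_mat n n"
  shows "mat_kernel (char_matrix A e) = {v \<in> carrier_vec n. A *\<^sub>v v = e \<cdot>\<^sub>v v}"
proof -
  have cm: "char_matrix A e *\<^sub>v v = A *\<^sub>v v - e \<cdot>\<^sub>v v" if v: "v \<in> carrier_vec n" for v
    using A v unfolding char_matrix_def
    by (intro eq_vecI) (auto simp: scalar_prod_def sum.distrib algebra_simps if_distrib[of "\<lambda>t. _ * t"] cong: if_cong)
  have "(A *\<^sub>v v - e \<cdot>\<^sub>v v = 0\<^sub>v n) = (A *\<^sub>v v = e \<cdot>\<^sub>v v)" if v: "v \<in> carrier_vec n" for v
  proof
    assume h: "A *\<^sub>v v - e \<cdot>\<^sub>v v = 0\<^sub>v n"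
    have "(A *\<^sub>v v) $ i = (e \<cdot>\<^sub>v v) $ i" if i: "i < n" for i
      using arg_cong[OF h, of "\<lambda>x. x $ i"] A v i by simp
    thus "A *\<^sub>v v = e \<cdot>\<^sub>v v" using A v by (intro eq_vecI) auto
  next
    assume "A *\<^sub>v v = e \<cdot>\<^sub>v v"
    thus "A *\<^sub>v v - e \<cdot>\<^sub>v v = 0\<^sub>v n" using A v by (intro eq_vecI) auto
  qed
  moreover have CM: "char_matrix A e \<in> carrier_mat n n" using A by simp
  ultimately show ?thesis unfolding mat_kernel[OF CM] using cm by auto
qed

lemma eigenspace_char:
  fixes A :: "complex mat"
  assumes A: "A \<in> carrier_mat n n"
  shows "eigenspace A e = mat_kernel (char_matrix A e)"
  unfolding mat_kernel_char_matrix[OF A] eigenspace_def using A by auto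

lemma kernel_dim_scaled:
  fixes A B :: "'a::field mat"
  assumes A: "A \<in> carrier_mat nr nc" and B: "B \<in> carrier_mat nr nc"
   and ent: "\<And>i j. i < nr \<Longrightarrow> j < nc \<Longrightarrow> B $$ (i,j) = al i * A $$ (i,j) * be j"
   and al: "\<And>i. i < nr \<Longrightarrow> al i \<noteq> 0" and be: "\<And>j. j < nc \<Longrightarrow> be j \<noteq> 0"
  shows "kernel_dim B = kernel_dim A"
proof -
  define T where "T z = vec nc (\<lambda>j. be j * z $ j)" for z :: "'a vec"
  define T' where "T' z = vec nc (\<lambda>j. z $ j / be j)" for z :: "'a vec"
  have Tc: "T z \<in> carrier_vec nc" "T' z \<in> carrier_vec nc" for z unfolding T_def T'_def by auto
  have key: "(B *\<^sub>v z) $ i = al i * (A *\<^sub>v T z) $ i" if z: "z \<in> carrier_vec nc" and i: "i < nr" for z i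
  proof -
    have "(B *\<^sub>v z) $ i = (\<Sum>j = 0..<nc. B $$ (i,j) * z $ j)"
      using B z i by (simp add: scalar_prod_def row_def)
    also have "\<dots> = (\<Sum>j = 0..<nc. al i * (A $$ (i,j) * (be j * z $ j)))"
      by (rule sum.cong) (auto simp: ent i ac_simps)
    also have "\<dots> = al i * (A *\<^sub>v T z) $ i"
      using A z i by (simp add: scalar_prod_def row_def T_def sum_distrib_left)
    finally show ?thesis .
  qed
  have TT': "T (T' z) = z" "T' (T z) = z" if "z \<in> carrier_vec nc" for z
    using that be unfolding T_def T'_def by (auto intro!: eq_vecI)
  have kB: "z \<in> mat_kernel B \<longleftrightarrow> z \<in> carrier_vec nc \<and> (\<forall>i<nr. (B *\<^sub>v z) $ i = 0)" for z
    unfolding mat_kernel_def using B by (auto simp: vec_eq_iff)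
  have kA: "z \<in> mat_kernel A \<longleftrightarrow> z \<in> carrier_vec nc \<and> (\<forall>i<nr. (A *\<^sub>v z) $ i = 0)" for z
    unfolding mat_kernel_def using A by (auto simp: vec_eq_iff)
  have BA: "z \<in> mat_kernel B \<longleftrightarrow> z \<in> carrier_vec nc \<and> T z \<in> mat_kernel A" for z
    unfolding kB kA using key al Tc by auto
  show ?thesis
  proof (rule kernel_dim_bij[OF B A, of T])
    show "T (x + y) = T x + T y" if "x \<in> mat_kernel B" "y \<in> mat_kernel B" for x y
      using that unfolding mat_kernel_def T_def using B by (auto intro!: eq_vecI simp: algebra_simps)
    show "T (c \<cdot>\<^sub>v x) = c \<cdot>\<^sub>v T x" if "x \<in> mat_kernel B" for c x
      using that unfolding mat_kernel_def T_def using B by (auto intro!: eq_vecI simp: algebra_simps)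
    show "bij_betw T (mat_kernel B) (mat_kernel A)"
    proof (rule bij_betw_byWitness[of _ T'])
      show "\<forall>a\<in>mat_kernel B. T' (T a) = a" using TT' BA by auto
      show "\<forall>a'\<in>mat_kernel A. T (T' a') = a'" using TT' kA by auto
      show "T ` mat_kernel B \<subseteq> mat_kernel A" using BA by auto
      show "T' ` mat_kernel A \<subseteq> mat_kernel B" using BA TT' Tc kA by auto
    qed
  qed
qed

lemma kernel_XXt:
  fixes X :: "'a::field mat"
  assumes X: "X \<in> carrier_mat r c" and mu: "mu \<noteq> 0"
  shows "kernel_dim (char_matrix (X * transpose_mat X) mu) = kernel_dim (char_matrix (transpose_mat X * X) mu)"
proof -
  let ?Xt = "transpose_mat X"
  have Xt: "?Xt \<in> carrier_mat c r" using X by simp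
  have XXt: "X * ?Xt \<in> carrier_mat r r" and XtX: "?Xt * X \<in> carrier_mat c c" using X by auto
  have k1: "mat_kernel (char_matrix (X * ?Xt) mu) = {v \<in> carrier_vec r. X *\<^sub>v (?Xt *\<^sub>v v) = mu \<cdot>\<^sub>v v}"
    unfolding mat_kernel_char_matrix[OF XXt] using X Xt by auto
  have k2: "mat_kernel (char_matrix (?Xt * X) mu) = {v \<in> carrier_vec c. ?Xt *\<^sub>v (X *\<^sub>v v) = mu \<cdot>\<^sub>v v}"
    unfolding mat_kernel_char_matrix[OF XtX] using X Xt by auto
  define T' where "T' z = (1/mu) \<cdot>\<^sub>v (X *\<^sub>v z)" for z
  show ?thesis
  proof (rule kernel_dim_bij[OF char_matrix_closed[OF XXt] char_matrix_closed[OF XtX], where T = "\<lambda>y. ?Xt *\<^sub>v y"])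
    show "?Xt *\<^sub>v (x + y) = ?Xt *\<^sub>v x + ?Xt *\<^sub>v y" if "x \<in> mat_kernel (char_matrix (X * ?Xt) mu)"
      "y \<in> mat_kernel (char_matrix (X * ?Xt) mu)" for x y
      using that unfolding k1 using Xt by (auto simp: mult_add_distrib_mat_vec)
    show "?Xt *\<^sub>v (a \<cdot>\<^sub>v x) = a \<cdot>\<^sub>v (?Xt *\<^sub>v x)" if "x \<in> mat_kernel (char_matrix (X * ?Xt) mu)" for a x
      using that unfolding k1 using Xt by (auto simp: mult_mat_vec)
    show "bij_betw (\<lambda>y. ?Xt *\<^sub>v y) (mat_kernel (char_matrix (X * ?Xt) mu)) (mat_kernel (char_matrix (?Xt * X) mu))"
    proof (rule bij_betw_byWitness[of _ T'])
      show "\<forall>a\<in>mat_kernel (char_matrix (X * ?Xt) mu). T' (?Xt *\<^sub>v a) = a"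
        unfolding k1 T'_def using mu by (auto simp: smult_smult_assoc)
      show "\<forall>a\<in>mat_kernel (char_matrix (?Xt * X) mu). ?Xt *\<^sub>v T' a = a"
        unfolding k2 T'_def using mu X Xt by (auto simp: smult_smult_assoc mult_mat_vec)
      show "(\<lambda>y. ?Xt *\<^sub>v y) ` mat_kernel (char_matrix (X * ?Xt) mu) \<subseteq> mat_kernel (char_matrix (?Xt * X) mu)"
        unfolding k1 k2 using Xt by (auto simp: mult_mat_vec)
      show "T' ` mat_kernel (char_matrix (?Xt * X) mu) \<subseteq> mat_kernel (char_matrix (X * ?Xt) mu)"
        unfolding k1 k2 T'_def using X Xt mu by (auto simp: mult_mat_vec smult_smult_assoc)
    qed
  qed
qed

lemma real_sq0:
  fixes v :: "real vec"
  assumes v: "v \<in> carrier_vec n" and z: "v \<bullet> v = 0"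
  shows "v = 0\<^sub>v n"
proof -
  have "(\<Sum>i\<in>{0..<n}. v $ i * v $ i) = 0" using z v unfolding scalar_prod_def by simp
  hence "\<forall>i\<in>{0..<n}. v $ i * v $ i = 0" by (subst (asm) sum_nonneg_eq_0_iff) auto
  thus ?thesis using v by (intro eq_vecI) auto
qed

lemma real_kernel_XtX:
  fixes X :: "real mat"
  assumes X: "X \<in> carrier_mat r c"
  shows "mat_kernel (transpose_mat X * X) = mat_kernel X"
proof
  show "mat_kernel X \<subseteq> mat_kernel (transpose_mat X * X)"
    by (rule mat_kernel_mult_subset[OF X]) (use X in simp)
  show "mat_kernel (transpose_mat X * X) \<subseteq> mat_kernel X"
  proof
    fix z assume "z \<in> mat_kernel (transpose_mat X * X)"
    hence z: "z \<in> carrier_vec c" and z0: "transpose_mat X *\<^sub>v (X *\<^sub>v z) = 0\<^sub>v c"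
      unfolding mat_kernel_def using X by auto
    have "(X *\<^sub>v z) \<bullet> (X *\<^sub>v z) = (transpose_mat X *\<^sub>v (X *\<^sub>v z)) \<bullet> z"
      using transpose_vec_mult_scalar[OF X z, of "X *\<^sub>v z"] X z by simp
    also have "\<dots> = 0" using z0 z by simp
    moreover have "X *\<^sub>v z \<in> carrier_vec r" using X z by simp
    ultimately have "X *\<^sub>v z = 0\<^sub>v r" using real_sq0[of "X *\<^sub>v z" r] by simp
    thus "z \<in> mat_kernel X" using z X unfolding mat_kernel_def by auto
  qed
qed

lemma adj_real:
  fixes X :: "real mat"
  assumes X: "X \<in> carrier_mat r c" and v: "v \<in> carrier_vec c" and w: "w \<in> carrier_vec r"
  shows "(map_mat complex_of_real X *\<^sub>v v) \<bullet>c w = v \<bullet>c (map_mat complex_of_real (transpose_mat X) *\<^sub>v w)"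
proof -
  have "(map_mat complex_of_real X *\<^sub>v v) \<bullet>c w = (\<Sum>i = 0..<r. (\<Sum>j = 0..<c. of_real (X $$ (i,j)) * v $ j) * cnj (w $ i))"
    using X v w by (simp add: scalar_prod_def row_def)
  also have "\<dots> = (\<Sum>i = 0..<r. \<Sum>j = 0..<c. v $ j * (of_real (X $$ (i,j)) * cnj (w $ i)))"
    by (rule sum.cong[OF refl], subst sum_distrib_right, rule sum.cong[OF refl], simp add: ac_simps)
  also have "\<dots> = (\<Sum>j = 0..<c. \<Sum>i = 0..<r. v $ j * (of_real (X $$ (i,j)) * cnj (w $ i)))"
    by (rule sum.swap)
  also have "\<dots> = v \<bullet>c (map_mat complex_of_real (transpose_mat X) *\<^sub>v w)"
    using X v w by (simp add: scalar_prod_def row_def sum_distrib_left cnj_sum)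
  finally show ?thesis .
qed

lemma refl_mat:
  fixes X :: "'a::comm_ring_1 mat"
  assumes X: "X \<in> carrier_mat r c" and XtX: "transpose_mat X * X = 1\<^sub>m c"
  defines "R \<equiv> 2 \<cdot>\<^sub>m (X * transpose_mat X) - 1\<^sub>m r"
  shows "R \<in> carrier_mat r r" "transpose_mat R = R" "R * R = 1\<^sub>m r"
    "\<And>u. u \<in> carrier_vec r \<Longrightarrow> R *\<^sub>v u = 2 \<cdot>\<^sub>v (X *\<^sub>v (transpose_mat X *\<^sub>v u)) - u"
proof -
  define P where "P = X * transpose_mat X"
  have P: "P \<in> carrier_mat r r" unfolding P_def using X by simp
  have PT: "transpose_mat P = P" unfolding P_def using X by (simp add: transpose_mult[OF X])
  have PP: "P * P = P"
  proof -
    have Xt: "transpose_mat X \<in> carrier_mat c r" using X by simp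
    have "P * P = X * (transpose_mat X * (X * transpose_mat X))" unfolding P_def
      by (rule assoc_mult_mat[OF X Xt P[unfolded P_def]])
    also have "transpose_mat X * (X * transpose_mat X) = (transpose_mat X * X) * transpose_mat X"
      by (rule assoc_mult_mat[OF Xt X Xt, symmetric])
    also have "\<dots> = transpose_mat X" unfolding XtX using Xt by simp
    finally show ?thesis unfolding P_def .
  qed
  have R: "R = 2 \<cdot>\<^sub>m P - 1\<^sub>m r" unfolding R_def P_def ..
  show Rc: "R \<in> carrier_mat r r" unfolding R by (rule minus_carrier_mat) simp
  have Psym: "P $$ (j,i) = P $$ (i,j)" if "i < r" "j < r" for i j
    using arg_cong[OF PT, of "\<lambda>M. M $$ (i,j)"] P that by simp
  show "transpose_mat R = R" unfolding R using P Psym by (intro eq_matI) auto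
  have "R * R = (2 \<cdot>\<^sub>m P - 1\<^sub>m r) * R" by (simp add: R)
  also have "\<dots> = (2 \<cdot>\<^sub>m P) * R - 1\<^sub>m r * R"
    by (rule minus_mult_distrib_mat) (use P Rc in auto)
  also have "(2 \<cdot>\<^sub>m P) * R = 2 \<cdot>\<^sub>m (P * R)" using P Rc by (simp add: mult_smult_assoc_mat)
  also have "P * R = P * (2 \<cdot>\<^sub>m P) - P * 1\<^sub>m r" unfolding R
    by (rule mult_minus_distrib_mat) (use P in auto)
  also have "P * (2 \<cdot>\<^sub>m P) = 2 \<cdot>\<^sub>m (P * P)" using P by (simp add: mult_smult_distrib)
  also have "P * 1\<^sub>m r = P" using P by simp
  also have "1\<^sub>m r * R = R" using Rc by simp
  finally have "R * R = 2 \<cdot>\<^sub>m (2 \<cdot>\<^sub>m P - P) - (2 \<cdot>\<^sub>m P - 1\<^sub>m r)" unfolding PP R .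
  also have "\<dots> = 1\<^sub>m r" using P by (intro eq_matI) auto
  finally show "R * R = 1\<^sub>m r" .
  show "R *\<^sub>v u = 2 \<cdot>\<^sub>v (X *\<^sub>v (transpose_mat X *\<^sub>v u)) - u" if u: "u \<in> carrier_vec r" for u
  proof -
    have "R *\<^sub>v u = 2 \<cdot>\<^sub>v (P *\<^sub>v u) - u"
      unfolding R using P u by (intro eq_vecI) (auto simp: scalar_prod_def sum_distrib_left
        sum_subtractf algebra_simps if_distrib[of "\<lambda>t. _ * t"] cong: if_cong)
    thus ?thesis unfolding P_def using X u by simp
  qed
qed

lemma orth_prod:
  fixes R1 R2 :: "'a::comm_ring_1 mat"
  assumes R1: "R1 \<in> carrier_mat r r" "transpose_mat R1 = R1" "R1 * R1 = 1\<^sub>m r"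
    and R2: "R2 \<in> carrier_mat r r" "transpose_mat R2 = R2" "R2 * R2 = 1\<^sub>m r"
  shows "transpose_mat (R1 * R2) * (R1 * R2) = 1\<^sub>m r"
proof -
  have "transpose_mat (R1 * R2) * (R1 * R2) = (R2 * R1) * (R1 * R2)"
    using R1 R2 by (simp add: transpose_mult[of _ r r])
  also have "\<dots> = R2 * (R1 * (R1 * R2))" using R1 R2 by (rule_tac assoc_mult_mat) auto
  also have "R1 * (R1 * R2) = (R1 * R1) * R2" using R1 R2 by (rule_tac assoc_mult_mat[symmetric]) auto
  finally show ?thesis using R1 R2 by simp
qed



locale emb =
  fixes V :: "'v set" and E :: "'v \<Rightarrow> 'v \<Rightarrow> bool" and \<rho> :: "'v \<times> 'v \<Rightarrow> 'v \<times> 'v"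
    and as :: "('v \<times> 'v) list" and vs :: "'v list" and fs :: "('v \<times> 'v) set list"
  assumes graph: "simple_graph V E" and conn: "connected_graph V E"
    and rot: "rotation_system E \<rho>" and circ: "circular E \<rho>"
    and as_dist: "distinct as" and as_set: "set as = arcs E"
    and vs_dist: "distinct vs" and vs_set: "set vs = V"
    and fs_dist: "distinct fs" and fs_set: "set fs = faces E \<rho>"
begin

abbreviation "fn \<equiv> face_next \<rho>"

lemma arcs_fin: "finite (arcs E)" using as_set by (metis List.finite_set)

lemma arc_sym: "a \<in> arcs E \<Longrightarrow> (snd a, fst a) \<in> arcs E"
  using graph unfolding arcs_def simple_graph_def by auto

lemma arc_V: "a \<in> arcs E \<Longrightarrow> fst a \<in> V \<and> snd a \<in> V"
  using graph unfolding arcs_def simple_graph_def by auto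

lemma rho_arcs: "a \<in> arcs E \<Longrightarrow> \<rho> a \<in> arcs E" and rho_fst: "a \<in> arcs E \<Longrightarrow> fst (\<rho> a) = fst a"
  and rho_inj: "inj_on \<rho> (arcs E)"
  using rot unfolding rotation_system_def bij_betw_def by auto

lemma fn_arcs: "a \<in> arcs E \<Longrightarrow> fn a \<in> arcs E"
  unfolding face_next_def using rho_arcs arc_sym by auto

lemma fn_fst: "a \<in> arcs E \<Longrightarrow> fst (fn a) = snd a"
  unfolding face_next_def using rho_fst arc_sym by fastforce

lemma fn_inj: "inj_on fn (arcs E)"
proof (rule inj_onI)
  fix a b assume a: "a \<in> arcs E" and b: "b \<in> arcs E" and eq: "fn a = fn b"
  hence "(snd a, fst a) = (snd b, fst b)"
    using rho_inj arc_sym unfolding face_next_def inj_on_def by blast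
  thus "a = b" by (simp add: prod_eq_iff)
qed

lemma fnpow_arcs: "a \<in> arcs E \<Longrightarrow> (fn ^^ k) a \<in> arcs E"
  by (induct k) (auto simp: fn_arcs)

lemma fnpow_cancel: "a \<in> arcs E \<Longrightarrow> (fn ^^ i) a = (fn ^^ (i + d)) a \<Longrightarrow> a = (fn ^^ d) a"
proof (induct i)
  case (Suc i)
  have "fn ((fn ^^ i) a) = fn ((fn ^^ (i + d)) a)" using Suc(3) by simp
  hence "(fn ^^ i) a = (fn ^^ (i + d)) a"
    using fn_inj fnpow_arcs[OF Suc(2)] unfolding inj_on_def by blast
  thus ?case using Suc by simp
qed simp

lemma fn_period: assumes a: "a \<in> arcs E" shows "\<exists>p>0. (fn ^^ p) a = a"
proof -
  define N where "N = card (arcs E)"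
  let ?g = "\<lambda>k. (fn ^^ k) a"
  have "?g ` {0..N} \<subseteq> arcs E" using fnpow_arcs[OF a] by auto
  hence "card (?g ` {0..N}) \<le> N" unfolding N_def using arcs_fin card_mono by blast
  hence "\<not> inj_on ?g {0..N}" using card_image[of ?g "{0..N}"] by auto
  then obtain i j where ij: "i \<in> {0..N}" "j \<in> {0..N}" "i \<noteq> j" "?g i = ?g j"
    unfolding inj_on_def by blast
  show ?thesis
  proof (cases "i < j")
    case True
    with ij fnpow_cancel[OF a, of i "j - i"] show ?thesis by (intro exI[of _ "j - i"]) auto
  next
    case False
    with ij fnpow_cancel[OF a, of j "i - j"] show ?thesis by (intro exI[of _ "i - j"]) auto
  qed
qed

lemma face_sub: "a \<in> arcs E \<Longrightarrow> face_of \<rho> a \<subseteq> arcs E"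
  unfolding face_of_def using fnpow_arcs[of a] by blast

lemma face_self: "a \<in> face_of \<rho> a"
  unfolding face_of_def by (auto intro: exI[of _ 0])

lemma face_fn: assumes "b \<in> face_of \<rho> a" shows "fn b \<in> face_of \<rho> a"
proof -
  from assms obtain k where "b = (fn ^^ k) a" unfolding face_of_def by auto
  hence "fn b = (fn ^^ (Suc k)) a" by simp
  thus ?thesis unfolding face_of_def by blast
qed

lemma face_same: assumes a: "a \<in> arcs E" and b: "b \<in> face_of \<rho> a"
  shows "face_of \<rho> b = face_of \<rho> a"
proof -
  from b obtain k where bk: "b = (fn ^^ k) a" unfolding face_of_def by auto
  from fn_period[OF a] obtain p where p: "p > 0" "(fn ^^ p) a = a" by auto
  have pk: "(fn ^^ (p * k)) a = a" for k
    by (induct k) (auto simp: funpow_add p(2) simp del: funpow.simps(2) simp: funpow.simps(1) )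
  have "a = (fn ^^ (p * k - k)) b"
  proof -
    have "p * k \<ge> k" using p by simp
    have "(fn ^^ (p * k - k)) b = (fn ^^ (p * k - k + k)) a" unfolding bk
      by (simp only: funpow_add o_apply)
    also have "p * k - k + k = p * k" using \<open>p * k \<ge> k\<close> by simp
    finally show ?thesis using pk by simp
  qed
  show ?thesis
  proof
    show "face_of \<rho> b \<subseteq> face_of \<rho> a"
    proof
      fix x assume "x \<in> face_of \<rho> b"
      then obtain j where "x = (fn ^^ j) b" unfolding face_of_def by auto
      hence "x = (fn ^^ (j + k)) a" unfolding bk by (simp only: funpow_add o_apply)
      thus "x \<in> face_of \<rho> a" unfolding face_of_def by blast
    qed
    show "face_of \<rho> a \<subseteq> face_of \<rho> b"
    proof
      fix x assume "x \<in> face_of \<rho> a"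
      then obtain j where "x = (fn ^^ j) a" unfolding face_of_def by auto
      hence "x = (fn ^^ (j + (p * k - k))) b" using \<open>a = _\<close> by (simp only: funpow_add o_apply)
      thus "x \<in> face_of \<rho> b" unfolding face_of_def by blast
    qed
  qed
qed

lemma faces_arc: "f \<in> faces E \<rho> \<Longrightarrow> \<exists>a\<in>arcs E. f = face_of \<rho> a"
  unfolding faces_def by auto

lemma faces_sub: "f \<in> faces E \<rho> \<Longrightarrow> f \<subseteq> arcs E"
  using faces_arc face_sub by blast

lemma faces_disj: assumes f: "f \<in> faces E \<rho>" and g: "g \<in> faces E \<rho>" and b: "b \<in> f" "b \<in> g"
  shows "f = g"
proof -
  from faces_arc[OF f] obtain a1 where a1: "a1 \<in> arcs E" "f = face_of \<rho> a1" by auto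
  from faces_arc[OF g] obtain a2 where a2: "a2 \<in> arcs E" "g = face_of \<rho> a2" by auto
  show ?thesis using face_same[OF a1(1), of b] face_same[OF a2(1), of b] a1 a2 b by simp
qed

abbreviation "nA \<equiv> length as"
abbreviation "nV \<equiv> length vs"
abbreviation "nF \<equiv> length fs"

definition phi :: "'v \<times> 'v \<Rightarrow> nat" where "phi a = (THE j. j < nF \<and> a \<in> fs ! j)"

lemma phi_uniq: assumes "j < nF" "a \<in> fs ! j" "j' < nF" "a \<in> fs ! j'" shows "j = j'"
proof -
  have "fs ! j \<in> faces E \<rho>" "fs ! j' \<in> faces E \<rho>" using assms fs_set nth_mem by blast+
  hence "fs ! j = fs ! j'" using faces_disj assms by blast
  thus ?thesis using fs_dist assms nth_eq_iff_index_eq by blast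
qed

lemma phi: assumes a: "a \<in> arcs E" shows "phi a < nF" "a \<in> fs ! phi a"
proof -
  have "face_of \<rho> a \<in> set fs" using a fs_set unfolding faces_def by auto
  then obtain j where j: "j < nF" "fs ! j = face_of \<rho> a" by (auto simp: in_set_conv_nth)
  hence ex: "j < nF \<and> a \<in> fs ! j" using face_self by simp
  have "phi a = j" unfolding phi_def
    by (rule the_equality) (use ex in simp, use ex phi_uniq in blast)
  thus "phi a < nF" "a \<in> fs ! phi a" using ex by auto
qed

lemma phi_eq: "j < nF \<Longrightarrow> a \<in> fs ! j \<Longrightarrow> phi a = j"
  using phi phi_uniq faces_sub fs_set nth_mem by blast

lemma phi_fn: assumes a: "a \<in> arcs E" shows "phi (fn a) = phi a"
proof -
  have fsf: "fs ! phi a \<in> faces E \<rho>" using phi[OF a] fs_set nth_mem by blast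
  then obtain c where c: "c \<in> arcs E" "fs ! phi a = face_of \<rho> c" using faces_arc by blast
  have "fn a \<in> fs ! phi a" using face_fn phi(2)[OF a] c by metis
  thus ?thesis using phi_eq phi(1)[OF a] by blast
qed

definition tau :: "'v \<Rightarrow> nat" where "tau x = (THE u. u < nV \<and> vs ! u = x)"

lemma tau: assumes "x \<in> V" shows "tau x < nV" "vs ! tau x = x"
proof -
  obtain u where u: "u < nV" "vs ! u = x" using assms vs_set by (auto simp: in_set_conv_nth)
  have "tau x = u" unfolding tau_def
    by (rule the_equality) (use u vs_dist nth_eq_iff_index_eq in auto)
  thus "tau x < nV" "vs ! tau x = x" using u by auto
qed

lemma tau_nth: "u < nV \<Longrightarrow> tau (vs ! u) = u"
  using tau[of "vs ! u"] vs_set vs_dist nth_eq_iff_index_eq nth_mem by metis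

definition dg :: "nat \<Rightarrow> nat" where "dg u = card {k. k < nA \<and> fst (as ! k) = vs ! u}"
definition cf :: "nat \<Rightarrow> nat" where "cf j = card {k. k < nA \<and> as ! k \<in> fs ! j}"

lemma arc_from: assumes x: "x \<in> V" shows "\<exists>a\<in>arcs E. fst a = x"
proof -
  obtain a where a: "a \<in> arcs E" using circ unfolding circular_def by auto
  have "(x, fst a) \<in> (arcs E)\<^sup>*" using conn x arc_V[OF a] unfolding connected_graph_def by auto
  thus ?thesis
  proof (cases rule: converse_rtranclE)
    case base thus ?thesis using a by auto
  next
    case (step y) thus ?thesis by (intro bexI[of _ "(x, y)"]) auto
  qed
qed

lemma dg_pos: assumes u: "u < nV" shows "dg u > 0"
proof -
  have "vs ! u \<in> V" using u vs_set nth_mem by blast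
  then obtain a where a: "a \<in> arcs E" "fst a = vs ! u" using arc_from by blast
  then obtain k where k: "k < nA" "as ! k = a" using as_set by (metis in_set_conv_nth)
  have "k \<in> {k. k < nA \<and> fst (as ! k) = vs ! u}" using k a by simp
  thus ?thesis unfolding dg_def by (metis (no_types, lifting) card_gt_0_iff empty_iff finite_nat_set_iff_bounded mem_Collect_eq)
qed

lemma cf_pos: assumes j: "j < nF" shows "cf j > 0"
proof -
  have "fs ! j \<in> faces E \<rho>" using j fs_set nth_mem by blast
  then obtain a where a: "a \<in> arcs E" "fs ! j = face_of \<rho> a" using faces_arc by blast
  then obtain k where k: "k < nA" "as ! k = a" using as_set by (metis in_set_conv_nth)
  have "k \<in> {k. k < nA \<and> as ! k \<in> fs ! j}" using k a face_self by simp
  thus ?thesis unfolding cf_def by (metis (no_types, lifting) card_gt_0_iff empty_iff finite_nat_set_iff_bounded mem_Collect_eq)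
qed

lemma vf_card: assumes j: "j < nF" and u: "u < nV"
  shows "card {k. k < nA \<and> fst (as ! k) = vs ! u \<and> as ! k \<in> fs ! j} = (if \<exists>a\<in>fs ! j. fst a = vs ! u then 1 else 0)"
proof (cases "\<exists>a\<in>fs ! j. fst a = vs ! u")
  case True
  then obtain a where a: "a \<in> fs ! j" "fst a = vs ! u" by auto
  have fsj: "fs ! j \<in> faces E \<rho>" using j fs_set nth_mem by blast
  hence "a \<in> arcs E" using faces_sub a by blast
  then obtain k0 where k0: "k0 < nA" "as ! k0 = a" using as_set by (metis in_set_conv_nth)
  have inj: "inj_on fst (fs ! j)" using circ fsj unfolding circular_def by auto
  have "{k. k < nA \<and> fst (as ! k) = vs ! u \<and> as ! k \<in> fs ! j} = {k0}"
  proof (safe)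
    fix k assume k: "k < nA" "fst (as ! k) = vs ! u" "as ! k \<in> fs ! j"
    hence "as ! k = a" using inj a unfolding inj_on_def by auto
    thus "k = k0" using k0 k as_dist nth_eq_iff_index_eq by metis
  qed (use k0 a in auto)
  thus ?thesis using True by simp
next
  case False
  hence "{k. k < nA \<and> fst (as ! k) = vs ! u \<and> as ! k \<in> fs ! j} = {}" by auto
  thus ?thesis using False by simp
qed

lemma sum_ind: "(\<Sum>k\<in>{0..<(N::nat)}. (if P k then 1 else 0 :: real)) = real (card {k. k < N \<and> P k})"
proof (induct N)
  case (Suc N)
  have e: "{k. k < Suc N \<and> P k} = (if P N then insert N {k. k < N \<and> P k} else {k. k < N \<and> P k})"
    by (auto simp: less_Suc_eq)
  show ?case using Suc by (simp add: e)
qed simp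


abbreviation "Mm \<equiv> arc_face_mat as fs"
abbreviation "Nm \<equiv> arc_tail_mat as vs"
abbreviation "Cm \<equiv> vertex_face_mat vs fs"
abbreviation "Mh \<equiv> normalize_cols Mm"
abbreviation "Nh \<equiv> normalize_cols Nm"

lemma Mh_c: "Mh \<in> carrier_mat nA nF" unfolding normalize_cols_def arc_face_mat_def by simp
lemma Nh_c: "Nh \<in> carrier_mat nA nV" unfolding normalize_cols_def arc_tail_mat_def by simp
lemma Cm_c: "Cm \<in> carrier_mat nV nF" unfolding vertex_face_mat_def by simp

lemma ind_sq: "(if P then 1 else (0::real))\<^sup>2 = (if P then 1 else 0)" by simp

lemma Mh_ent: assumes "k < nA" "j < nF"
  shows "Mh $$ (k,j) = (if as ! k \<in> fs ! j then 1 else 0) / sqrt (real (cf j))"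
proof -
  have "(\<Sum>k'<nA. (Mm $$ (k', j))\<^sup>2) = (\<Sum>k'\<in>{0..<nA}. (if as ! k' \<in> fs ! j then 1 else 0))"
    unfolding atLeast0LessThan using assms by (intro sum.cong) (auto simp: arc_face_mat_def)
  also have "\<dots> = real (cf j)" unfolding sum_ind cf_def ..
  finally show ?thesis using assms unfolding normalize_cols_def by (simp add: arc_face_mat_def)
qed

lemma Nh_ent: assumes "k < nA" "u < nV"
  shows "Nh $$ (k,u) = (if fst (as ! k) = vs ! u then 1 else 0) / sqrt (real (dg u))"
proof -
  have "(\<Sum>k'<nA. (Nm $$ (k', u))\<^sup>2) = (\<Sum>k'\<in>{0..<nA}. (if fst (as ! k') = vs ! u then 1 else 0))"
    unfolding atLeast0LessThan using assms by (intro sum.cong) (auto simp: arc_tail_mat_def)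
  also have "\<dots> = real (dg u)" unfolding sum_ind dg_def ..
  finally show ?thesis using assms unfolding normalize_cols_def by (simp add: arc_tail_mat_def)
qed

lemma prod_ind: "((if P then 1 else 0) / a) * ((if Q then 1 else 0) / b) = (if P \<and> Q then 1 else (0::real)) / (a * b)"
  by simp

lemma tmult_ent:
  assumes X: "X \<in> carrier_mat nA c1" and Y: "Y \<in> carrier_mat nA c2" and i: "i < c1" and j: "j < c2"
  shows "(transpose_mat X * Y) $$ (i,j) = (\<Sum>k\<in>{0..<nA}. X $$ (k,i) * Y $$ (k,j))"
  using X Y i j by (simp add: scalar_prod_def)

lemma MtM: "transpose_mat Mh * Mh = 1\<^sub>m nF"
proof (rule eq_matI)
  fix i j assume "i < dim_row (1\<^sub>m nF)" "j < dim_col (1\<^sub>m nF)"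
  hence i: "i < nF" and j: "j < nF" by auto
  have "(transpose_mat Mh * Mh) $$ (i,j) = (\<Sum>k\<in>{0..<nA}. (if as ! k \<in> fs ! i \<and> as ! k \<in> fs ! j then 1 else 0) / (sqrt (real (cf i)) * sqrt (real (cf j))))"
    unfolding tmult_ent[OF Mh_c Mh_c i j] by (intro sum.cong) (auto simp: Mh_ent i j simp del: of_nat_eq_0_iff)
  also have "\<dots> = real (card {k. k < nA \<and> as ! k \<in> fs ! i \<and> as ! k \<in> fs ! j}) / (sqrt (real (cf i)) * sqrt (real (cf j)))"
    unfolding sum_divide_distrib[symmetric] sum_ind ..
  also have "\<dots> = 1\<^sub>m nF $$ (i,j)"
  proof (cases "i = j")
    case True
    have c: "card {k. k < nA \<and> as ! k \<in> fs ! i \<and> as ! k \<in> fs ! j} = cf i" using True unfolding cf_def by simp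
    have "real (cf i) > 0" using cf_pos[OF i] by simp
    thus ?thesis unfolding c using True i by (simp del: of_nat_eq_0_iff)
  next
    case False
    have "{k. k < nA \<and> as ! k \<in> fs ! i \<and> as ! k \<in> fs ! j} = {}" using phi_uniq[OF i _ j] False by blast
    thus ?thesis using False i j by simp
  qed
  finally show "(transpose_mat Mh * Mh) $$ (i,j) = 1\<^sub>m nF $$ (i,j)" .
qed (use Mh_c in auto)

lemma NtN: "transpose_mat Nh * Nh = 1\<^sub>m nV"
proof (rule eq_matI)
  fix i j assume "i < dim_row (1\<^sub>m nV)" "j < dim_col (1\<^sub>m nV)"
  hence i: "i < nV" and j: "j < nV" by auto
  have "(transpose_mat Nh * Nh) $$ (i,j) = (\<Sum>k\<in>{0..<nA}. (if fst (as ! k) = vs ! i \<and> fst (as ! k) = vs ! j then 1 else 0) / (sqrt (real (dg i)) * sqrt (real (dg j))))"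
    unfolding tmult_ent[OF Nh_c Nh_c i j] by (intro sum.cong) (auto simp: Nh_ent i j simp del: of_nat_eq_0_iff)
  also have "\<dots> = real (card {k. k < nA \<and> fst (as ! k) = vs ! i \<and> fst (as ! k) = vs ! j}) / (sqrt (real (dg i)) * sqrt (real (dg j)))"
    unfolding sum_divide_distrib[symmetric] sum_ind ..
  also have "\<dots> = 1\<^sub>m nV $$ (i,j)"
  proof (cases "i = j")
    case True
    have c: "card {k. k < nA \<and> fst (as ! k) = vs ! i \<and> fst (as ! k) = vs ! j} = dg i" using True unfolding dg_def by simp
    have "real (dg i) > 0" using dg_pos[OF i] by simp
    thus ?thesis unfolding c using True i by (simp del: of_nat_eq_0_iff)
  next
    case False
    have "vs ! i \<noteq> vs ! j" using False i j vs_dist nth_eq_iff_index_eq by blast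
    hence "{k. k < nA \<and> fst (as ! k) = vs ! i \<and> fst (as ! k) = vs ! j} = {}" by auto
    thus ?thesis using False i j by simp
  qed
  finally show "(transpose_mat Nh * Nh) $$ (i,j) = 1\<^sub>m nV $$ (i,j)" .
qed (use Nh_c in auto)

lemma Chr_ent: assumes u: "u < nV" and j: "j < nF"
  shows "(transpose_mat Nh * Mh) $$ (u,j) = (1 / sqrt (real (dg u))) * Cm $$ (u,j) * (1 / sqrt (real (cf j)))"
proof -
  have "(transpose_mat Nh * Mh) $$ (u,j) = (\<Sum>k\<in>{0..<nA}. (if fst (as ! k) = vs ! u \<and> as ! k \<in> fs ! j then 1 else 0) / (sqrt (real (dg u)) * sqrt (real (cf j))))"
    unfolding tmult_ent[OF Nh_c Mh_c u j] by (intro sum.cong) (auto simp: Mh_ent Nh_ent u j simp del: of_nat_eq_0_iff)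
  also have "\<dots> = real (card {k. k < nA \<and> fst (as ! k) = vs ! u \<and> as ! k \<in> fs ! j}) / (sqrt (real (dg u)) * sqrt (real (cf j)))"
    unfolding sum_divide_distrib[symmetric] sum_ind ..
  also have "\<dots> = (1 / sqrt (real (dg u))) * Cm $$ (u,j) * (1 / sqrt (real (cf j)))"
    unfolding vf_card[OF j u] using u j by (simp add: vertex_face_mat_def)
  finally show ?thesis .
qed

lemma kernel_dim_Chr: "kernel_dim (transpose_mat Nh * Mh) = kernel_dim Cm"
proof (rule kernel_dim_scaled[OF Cm_c _ Chr_ent])
  show "transpose_mat Nh * Mh \<in> carrier_mat nV nF" using Nh_c Mh_c by simp
  show "1 / sqrt (real (dg i)) \<noteq> 0" if "i < nV" for i using dg_pos[OF that] by simp
  show "1 / sqrt (real (cf j)) \<noteq> 0" if "j < nF" for j using cf_pos[OF that] by simp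
qed

lemma Mh_act: assumes z: "z \<in> carrier_vec nF" and k: "k < nA"
  shows "(Mh *\<^sub>v z) $ k = z $ phi (as ! k) / sqrt (real (cf (phi (as ! k))))"
proof -
  have a: "as ! k \<in> arcs E" using k as_set nth_mem by blast
  have "(Mh *\<^sub>v z) $ k = (\<Sum>j\<in>{0..<nF}. Mh $$ (k,j) * z $ j)"
    using Mh_c z k by (simp add: scalar_prod_def)
  also have "\<dots> = (\<Sum>j\<in>{0..<nF}. if j = phi (as ! k) then z $ j / sqrt (real (cf j)) else 0)"
  proof (rule sum.cong[OF refl])
    fix j assume j: "j \<in> {0..<nF}"
    have "as ! k \<in> fs ! j \<longleftrightarrow> j = phi (as ! k)" using phi[OF a] phi_eq[of j "as ! k"] j by auto
    thus "Mh $$ (k,j) * z $ j = (if j = phi (as ! k) then z $ j / sqrt (real (cf j)) else 0)"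
      using j Mh_ent[OF k, of j] by auto
  qed
  also have "\<dots> = z $ phi (as ! k) / sqrt (real (cf (phi (as ! k))))"
    using phi(1)[OF a] by (simp add: sum.delta')
  finally show ?thesis .
qed

lemma Nh_act: assumes y: "y \<in> carrier_vec nV" and k: "k < nA"
  shows "(Nh *\<^sub>v y) $ k = y $ tau (fst (as ! k)) / sqrt (real (dg (tau (fst (as ! k)))))"
proof -
  have a: "as ! k \<in> arcs E" using k as_set nth_mem by blast
  hence x: "fst (as ! k) \<in> V" using arc_V by blast
  have "(Nh *\<^sub>v y) $ k = (\<Sum>u\<in>{0..<nV}. Nh $$ (k,u) * y $ u)"
    using Nh_c y k by (simp add: scalar_prod_def)
  also have "\<dots> = (\<Sum>u\<in>{0..<nV}. if u = tau (fst (as ! k)) then y $ u / sqrt (real (dg u)) else 0)"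
  proof (rule sum.cong[OF refl])
    fix u assume u: "u \<in> {0..<nV}"
    have u': "u < nV" using u by simp
    have "fst (as ! k) = vs ! u \<longleftrightarrow> u = tau (fst (as ! k))"
    proof
      assume "fst (as ! k) = vs ! u" thus "u = tau (fst (as ! k))" using tau_nth[OF u'] by simp
    next
      assume "u = tau (fst (as ! k))" thus "fst (as ! k) = vs ! u" using tau(2)[OF x] by simp
    qed
    thus "Nh $$ (k,u) * y $ u = (if u = tau (fst (as ! k)) then y $ u / sqrt (real (dg u)) else 0)"
      using u Nh_ent[OF k, of u] by auto
  qed
  also have "\<dots> = y $ tau (fst (as ! k)) / sqrt (real (dg (tau (fst (as ! k)))))"
    using tau(1)[OF x] by (simp add: sum.delta')
  finally show ?thesis .
qed

lemma tact: assumes X: "X \<in> carrier_mat nA c" and x: "x \<in> carrier_vec nA" and j: "j < c"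
  shows "(transpose_mat X *\<^sub>v x) $ j = (\<Sum>k\<in>{0..<nA}. X $$ (k,j) * x $ k)"
  using X x j by (simp add: scalar_prod_def)

lemma ones_act:
  defines "ones \<equiv> vec nA (\<lambda>_. 1::real)"
  shows "transpose_mat Mh *\<^sub>v ones = vec nF (\<lambda>j. sqrt (real (cf j)))"
    "transpose_mat Nh *\<^sub>v ones = vec nV (\<lambda>u. sqrt (real (dg u)))"
    "Mh *\<^sub>v vec nF (\<lambda>j. sqrt (real (cf j))) = ones"
    "Nh *\<^sub>v vec nV (\<lambda>u. sqrt (real (dg u))) = ones"
proof -
  have oc: "ones \<in> carrier_vec nA" unfolding ones_def by simp
  show "transpose_mat Mh *\<^sub>v ones = vec nF (\<lambda>j. sqrt (real (cf j)))"
  proof (rule eq_vecI)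
    fix j assume "j < dim_vec (vec nF (\<lambda>j. sqrt (real (cf j))))"
    hence j: "j < nF" by simp
    have "(transpose_mat Mh *\<^sub>v ones) $ j = (\<Sum>k\<in>{0..<nA}. (if as ! k \<in> fs ! j then 1 else 0) / sqrt (real (cf j)))"
      unfolding tact[OF Mh_c oc j] by (rule sum.cong) (auto simp: Mh_ent j ones_def)
    also have "\<dots> = real (cf j) / sqrt (real (cf j))" unfolding sum_divide_distrib[symmetric] sum_ind cf_def ..
    also have "\<dots> = sqrt (real (cf j))" using cf_pos[OF j] by (simp add: real_div_sqrt)
    finally show "(transpose_mat Mh *\<^sub>v ones) $ j = vec nF (\<lambda>j. sqrt (real (cf j))) $ j" using j by simp
  qed (use Mh_c in simp)
  show "transpose_mat Nh *\<^sub>v ones = vec nV (\<lambda>u. sqrt (real (dg u)))"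
  proof (rule eq_vecI)
    fix j assume "j < dim_vec (vec nV (\<lambda>u. sqrt (real (dg u))))"
    hence j: "j < nV" by simp
    have "(transpose_mat Nh *\<^sub>v ones) $ j = (\<Sum>k\<in>{0..<nA}. (if fst (as ! k) = vs ! j then 1 else 0) / sqrt (real (dg j)))"
      unfolding tact[OF Nh_c oc j] by (rule sum.cong) (auto simp: Nh_ent j ones_def)
    also have "\<dots> = real (dg j) / sqrt (real (dg j))" unfolding sum_divide_distrib[symmetric] sum_ind dg_def ..
    also have "\<dots> = sqrt (real (dg j))" using dg_pos[OF j] by (simp add: real_div_sqrt)
    finally show "(transpose_mat Nh *\<^sub>v ones) $ j = vec nV (\<lambda>u. sqrt (real (dg u))) $ j" using j by simp
  qed (use Nh_c in simp)
  show "Mh *\<^sub>v vec nF (\<lambda>j. sqrt (real (cf j))) = ones"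
  proof (rule eq_vecI)
    fix k assume "k < dim_vec ones" hence k: "k < nA" unfolding ones_def by simp
    have a: "as ! k \<in> arcs E" using k as_set nth_mem by blast
    show "(Mh *\<^sub>v vec nF (\<lambda>j. sqrt (real (cf j)))) $ k = ones $ k"
      unfolding Mh_act[OF vec_carrier k] using phi(1)[OF a] cf_pos[OF phi(1)[OF a]] k by (simp add: ones_def)
  qed (use Mh_c in \<open>simp add: ones_def\<close>)
  show "Nh *\<^sub>v vec nV (\<lambda>u. sqrt (real (dg u))) = ones"
  proof (rule eq_vecI)
    fix k assume "k < dim_vec ones" hence k: "k < nA" unfolding ones_def by simp
    have a: "as ! k \<in> arcs E" using k as_set nth_mem by blast
    hence x: "fst (as ! k) \<in> V" using arc_V by blast
    show "(Nh *\<^sub>v vec nV (\<lambda>u. sqrt (real (dg u)))) $ k = ones $ k"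
      unfolding Nh_act[OF vec_carrier k] using tau(1)[OF x] dg_pos[OF tau(1)[OF x]] k by (simp add: ones_def)
  qed (use Nh_c in \<open>simp add: ones_def\<close>)
qed

lemma sq_expand: fixes a b :: "real vec"
  assumes "a \<in> carrier_vec N" "b \<in> carrier_vec N"
  shows "(a - b) \<bullet> (a - b) = a \<bullet> a - 2 * (a \<bullet> b) + b \<bullet> b"
  using assms unfolding scalar_prod_def
  by (simp add: sum_subtractf sum.distrib sum_distrib_left algebra_simps)

lemma one_eig_main:
  assumes zc: "z \<in> carrier_vec nF"
    and Kz: "transpose_mat Mh *\<^sub>v (Nh *\<^sub>v (transpose_mat Nh *\<^sub>v (Mh *\<^sub>v z))) = z"
  shows "\<exists>c. z = c \<cdot>\<^sub>v vec nF (\<lambda>j. sqrt (real (cf j)))"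
proof -
  define p where "p = Mh *\<^sub>v z"
  define y where "y = transpose_mat Nh *\<^sub>v p"
  define x where "x = Nh *\<^sub>v y"
  have pc: "p \<in> carrier_vec nA" unfolding p_def using Mh_c zc by simp
  have yc: "y \<in> carrier_vec nV" unfolding y_def using Nh_c pc by simp
  have xc: "x \<in> carrier_vec nA" unfolding x_def using Nh_c yc by simp
  have Mtx: "transpose_mat Mh *\<^sub>v x = z" using Kz unfolding x_def y_def p_def .
  have MtMv: "transpose_mat Mh *\<^sub>v (Mh *\<^sub>v v) = v" if "v \<in> carrier_vec nF" for v
    using assoc_mult_mat_vec[of "transpose_mat Mh" nF nA Mh nF v] Mh_c that MtM by simp
  have NtNv: "transpose_mat Nh *\<^sub>v (Nh *\<^sub>v v) = v" if "v \<in> carrier_vec nV" for v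
    using assoc_mult_mat_vec[of "transpose_mat Nh" nV nA Nh nV v] Nh_c that NtN by simp
  have pp: "p \<bullet> p = z \<bullet> z"
    using transpose_vec_mult_scalar[OF Mh_c zc pc] MtMv[OF zc] unfolding p_def by simp
  have xp: "x \<bullet> p = z \<bullet> z"
    using transpose_vec_mult_scalar[OF Mh_c zc xc] Mtx unfolding p_def by simp
  have xx: "x \<bullet> x = y \<bullet> y"
    using transpose_vec_mult_scalar[OF Nh_c yc xc] NtNv[OF yc] unfolding x_def by simp
  have px: "p \<bullet> x = y \<bullet> y"
    using transpose_vec_mult_scalar[OF Nh_c yc pc] unfolding x_def y_def by simp
  have "p \<bullet> x = x \<bullet> p" using comm_scalar_prod[OF pc xc] .
  hence "(p - x) \<bullet> (p - x) = 0" unfolding sq_expand[OF pc xc] using pp xp xx px by simp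
  hence "p - x = 0\<^sub>v nA" using real_sq0[of "p - x" nA] pc xc by simp
  hence px_eq: "p $ k = x $ k" if "k < nA" for k
  proof -
    have "(p - x) $ k = 0" using \<open>p - x = 0\<^sub>v nA\<close> that by simp
    thus ?thesis using that pc xc by simp
  qed
  define g where "g j = z $ j / sqrt (real (cf j))" for j
  define h where "h v = y $ tau v / sqrt (real (dg (tau v)))" for v
  have gh: "g (phi a) = h (fst a)" if a: "a \<in> arcs E" for a
  proof -
    obtain k where k: "k < nA" "as ! k = a" using as_set a by (metis in_set_conv_nth)
    show ?thesis using px_eq[OF k(1)] Mh_act[OF zc k(1)] Nh_act[OF yc k(1)] k
      unfolding g_def h_def p_def x_def by simp
  qed
  have edge: "h (fst a) = h (snd a)" if a: "a \<in> arcs E" for a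
    using gh[OF a] gh[OF fn_arcs[OF a]] phi_fn[OF a] fn_fst[OF a] by simp
  obtain a0 where a0: "a0 \<in> arcs E" using circ unfolding circular_def by auto
  define x0 where "x0 = fst a0"
  have x0: "x0 \<in> V" using arc_V[OF a0] x0_def by simp
  have hconst: "h v = h x0" if v: "v \<in> V" for v
  proof -
    have "(x0, v) \<in> (arcs E)\<^sup>*" using conn x0 v unfolding connected_graph_def by auto
    thus ?thesis
    proof (induct rule: rtrancl_induct)
      case (step b c)
      thus ?case using edge[OF step(2)] by simp
    qed simp
  qed
  show ?thesis
  proof (rule exI[of _ "h x0"], rule eq_vecI)
    fix j assume "j < dim_vec (h x0 \<cdot>\<^sub>v vec nF (\<lambda>j. sqrt (real (cf j))))"
    hence j: "j < nF" by simp
    have "fs ! j \<in> faces E \<rho>" using j fs_set nth_mem by blast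
    then obtain a where a: "a \<in> arcs E" "fs ! j = face_of \<rho> a" using faces_arc by blast
    have "phi a = j" using phi_eq[OF j] a face_self by simp
    hence "g j = h x0" using gh[OF a(1)] hconst arc_V[OF a(1)] by simp
    moreover have "sqrt (real (cf j)) > 0" using cf_pos[OF j] by simp
    ultimately show "z $ j = (h x0 \<cdot>\<^sub>v vec nF (\<lambda>j. sqrt (real (cf j)))) $ j"
      unfolding g_def using j by (simp add: field_simps)
  qed (use zc in simp)
qed

lemma nF_pos: "nF > 0"
proof -
  obtain a0 where a0: "a0 \<in> arcs E" using circ unfolding circular_def by auto
  have "phi a0 < nF" using phi(1)[OF a0] .
  thus ?thesis by linarith
qed

lemma one_eig:
  "kernel_dim (char_matrix (transpose_mat (transpose_mat Nh * Mh) * (transpose_mat Nh * Mh)) 1) = 1"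
proof -
  define Ch where "Ch = transpose_mat Nh * Mh"
  have Chc: "Ch \<in> carrier_mat nV nF" unfolding Ch_def using Nh_c Mh_c by simp
  define K where "K = transpose_mat Ch * Ch"
  have Kc: "K \<in> carrier_mat nF nF" unfolding K_def using Chc by simp
  have ChT: "transpose_mat Ch = transpose_mat Mh * Nh"
    unfolding Ch_def using Nh_c Mh_c by (simp add: transpose_mult[of _ nV nA])
  have Kact: "K *\<^sub>v z = transpose_mat Mh *\<^sub>v (Nh *\<^sub>v (transpose_mat Nh *\<^sub>v (Mh *\<^sub>v z)))"
    if z: "z \<in> carrier_vec nF" for z
  proof -
    have MtC: "transpose_mat Mh \<in> carrier_mat nF nA" and NtC: "transpose_mat Nh \<in> carrier_mat nV nA"
      using Mh_c Nh_c by auto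
    have c1: "transpose_mat Mh * Nh \<in> carrier_mat nF nV" using MtC Nh_c by simp
    have c2: "transpose_mat Nh * Mh \<in> carrier_mat nV nF" using NtC Mh_c by simp
    have "K *\<^sub>v z = (transpose_mat Mh * Nh) *\<^sub>v ((transpose_mat Nh * Mh) *\<^sub>v z)"
      unfolding K_def ChT unfolding Ch_def by (rule assoc_mult_mat_vec[OF c1 c2 z])
    also have "\<dots> = transpose_mat Mh *\<^sub>v (Nh *\<^sub>v (transpose_mat Nh *\<^sub>v (Mh *\<^sub>v z)))"
      using MtC NtC Mh_c Nh_c z by simp
    finally show ?thesis .
  qed
  have ker: "mat_kernel (char_matrix K 1) = {z \<in> carrier_vec nF. K *\<^sub>v z = z}"
    unfolding mat_kernel_char_matrix[OF Kc] by simp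
  define v0 where "v0 = vec nF (\<lambda>j. sqrt (real (cf j)))"
  have v0c: "v0 \<in> carrier_vec nF" unfolding v0_def by simp
  have v0K: "K *\<^sub>v v0 = v0" unfolding Kact[OF v0c] unfolding v0_def ones_act ..
  have v0nz: "v0 \<noteq> 0\<^sub>v nF"
  proof
    assume "v0 = 0\<^sub>v nF"
    hence "v0 $ 0 = 0" using nF_pos by simp
    thus False using nF_pos cf_pos[OF nF_pos] unfolding v0_def by simp
  qed
  interpret KK: kernel nF nF "char_matrix K 1" by (unfold_locales) (use Kc in simp)
  have v0k: "v0 \<in> mat_kernel (char_matrix K 1)" unfolding ker using v0c v0K by simp
  have span: "KK.Ker.span {v0} = mat_kernel (char_matrix K 1)"
  proof
    show "KK.Ker.span {v0} \<subseteq> mat_kernel (char_matrix K 1)"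
      using KK.Ker.span_is_subset2[of "{v0}"] v0k by simp
    show "mat_kernel (char_matrix K 1) \<subseteq> KK.Ker.span {v0}"
    proof
      fix z assume "z \<in> mat_kernel (char_matrix K 1)"
      hence zc: "z \<in> carrier_vec nF" and Kz: "K *\<^sub>v z = z" unfolding ker by auto
      from one_eig_main[OF zc Kz[unfolded Kact[OF zc]]] obtain c where zc': "z = c \<cdot>\<^sub>v v0"
        unfolding v0_def by auto
      have sub: "submodule class_ring (KK.Ker.span {v0}) KK.VK"
        by (rule KK.Ker.span_is_submodule) (use v0k in simp)
      have "v0 \<in> KK.Ker.span {v0}" using KK.Ker.span_self v0k by simp
      hence "c \<cdot>\<^sub>v v0 \<in> KK.Ker.span {v0}"
        using submodule.smult_closed[OF sub, of c v0] by (simp add: class_ring_simps)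
      thus "z \<in> KK.Ker.span {v0}" using zc' by simp
    qed
  qed
  have "KK.dim = 1" by (rule KK.Ker.dim1I) (use span v0nz v0k in simp_all)
  thus ?thesis unfolding Ch_def[symmetric] K_def[symmetric] using Kc by simp
qed

end


lemma cmat_c: "X \<in> carrier_mat r c \<Longrightarrow> cmat X \<in> carrier_mat r c" unfolding cmat_def by simp
lemma cmat_transpose: "cmat (transpose_mat X) = transpose_mat (cmat X)"
  unfolding cmat_def by (intro eq_matI) auto
lemma cmat_mult: "X \<in> carrier_mat r k \<Longrightarrow> Y \<in> carrier_mat k c \<Longrightarrow> cmat (X * Y) = cmat X * cmat Y"
  unfolding cmat_def by (rule of_real_hom.mat_hom_mult)
lemma cmat_one: "cmat (1\<^sub>m n) = 1\<^sub>m n" unfolding cmat_def by (rule of_real_hom.mat_hom_one)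
lemma cmat_refl: "X \<in> carrier_mat r c \<Longrightarrow>
  cmat (2 \<cdot>\<^sub>m (X * transpose_mat X) - 1\<^sub>m r) = 2 \<cdot>\<^sub>m (cmat X * transpose_mat (cmat X)) - 1\<^sub>m r"
  by (simp add: cmat_mult[symmetric] cmat_transpose[symmetric]) (auto simp: cmat_def intro!: eq_matI)

lemma cscalar_smult_left:
  fixes v w :: "complex vec"
  assumes "v \<in> carrier_vec n" "w \<in> carrier_vec n"
  shows "(c \<cdot>\<^sub>v v) \<bullet>c w = c * (v \<bullet>c w)"
  using assms unfolding scalar_prod_def by (simp add: sum_distrib_left ac_simps)

lemma eigenvalue_kernel_dim:
  fixes A :: "'a::field mat"
  assumes A: "A \<in> carrier_mat n n"
  shows "eigenvalue A e \<longleftrightarrow> kernel_dim (char_matrix A e) > 0"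
proof -
  have CM: "char_matrix A e \<in> carrier_mat n n" using A by simp
  interpret KK: kernel n n "char_matrix A e" by unfold_locales (rule CM)
  have kd: "kernel_dim (char_matrix A e) = KK.dim" using CM by simp
  have ev: "eigenvalue A e \<longleftrightarrow> (\<exists>v \<in> mat_kernel (char_matrix A e). v \<noteq> 0\<^sub>v n)"
    unfolding eigenvalue_def eigenvector_def mat_kernel_char_matrix[OF A] using A by auto
  show ?thesis
  proof
    assume "eigenvalue A e"
    then obtain v where v: "v \<in> mat_kernel (char_matrix A e)" "v \<noteq> 0\<^sub>v n" using ev by auto
    show "kernel_dim (char_matrix A e) > 0"
    proof (rule ccontr)
      assume "\<not> kernel_dim (char_matrix A e) > 0"
      hence d0: "KK.dim = 0" using kd by simp
      from kernel_basis_exists[OF CM] obtain bs where bs: "finite bs" "KK.basis bs" by auto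
      have "card bs = 0" using KK.Ker.dim_basis[OF bs] d0 by simp
      hence "bs = {}" using bs(1) by simp
      hence "KK.Ker.span {} = mat_kernel (char_matrix A e)" using bs(2) unfolding KK.Ker.basis_def by simp
      hence "mat_kernel (char_matrix A e) = {0\<^sub>v n}" using KK.Ker.span_empty by simp
      thus False using v by simp
    qed
  next
    assume pos: "kernel_dim (char_matrix A e) > 0"
    show "eigenvalue A e"
    proof (rule ccontr)
      assume "\<not> eigenvalue A e"
      hence k0: "mat_kernel (char_matrix A e) = {0\<^sub>v n}" using ev mat_kernel_char_matrix[OF A] by auto
      have "KK.Ker.span {0\<^sub>v n} = {0\<^sub>v n}"
        using KK.Ker.span_zero KK.Ker.span_is_subset2[of "{0\<^sub>v n}"] k0 by auto
      hence "KK.dim = 0" by (intro KK.Ker.dim0I) (simp add: k0)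
      thus False using pos kd by simp
    qed
  qed
qed

context emb
begin

abbreviation "Ac \<equiv> cmat Mh"
abbreviation "Bc \<equiv> cmat Nh"
abbreviation "Uc \<equiv> cmat (transition_mat Mh Nh)"
abbreviation "Chr \<equiv> transpose_mat Nh * Mh"
abbreviation "Chc \<equiv> cmat Chr"
abbreviation "Kc \<equiv> Chc * transpose_mat Chc"
abbreviation "Kp \<equiv> transpose_mat Chc * Chc"

lemma Ac_c: "Ac \<in> carrier_mat nA nF" using cmat_c[OF Mh_c] .
lemma Bc_c: "Bc \<in> carrier_mat nA nV" using cmat_c[OF Nh_c] .
lemma Chr_c: "Chr \<in> carrier_mat nV nF" using Nh_c Mh_c by simp
lemma Chc_c: "Chc \<in> carrier_mat nV nF" using cmat_c[OF Chr_c] .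
lemma Kc_c: "Kc \<in> carrier_mat nV nV" using Chc_c by simp
lemma Kp_c: "Kp \<in> carrier_mat nF nF" using Chc_c by simp
lemma AtA: "transpose_mat Ac * Ac = 1\<^sub>m nF"
  using cmat_mult[of "transpose_mat Mh" nF nA Mh nF] Mh_c MtM cmat_one cmat_transpose by simp
lemma BtB: "transpose_mat Bc * Bc = 1\<^sub>m nV"
  using cmat_mult[of "transpose_mat Nh" nV nA Nh nV] Nh_c NtN cmat_one cmat_transpose by simp
lemma Chc_eq: "Chc = transpose_mat Bc * Ac"
  using cmat_mult[of "transpose_mat Nh" nV nA Mh nF] Nh_c Mh_c cmat_transpose by simp

definition "RPc = 2 \<cdot>\<^sub>m (Ac * transpose_mat Ac) - 1\<^sub>m nA"
definition "RQc = 2 \<cdot>\<^sub>m (Bc * transpose_mat Bc) - 1\<^sub>m nA"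

lemma RP: "RPc \<in> carrier_mat nA nA" "transpose_mat RPc = RPc" "RPc * RPc = 1\<^sub>m nA"
    "\<And>u. u \<in> carrier_vec nA \<Longrightarrow> RPc *\<^sub>v u = 2 \<cdot>\<^sub>v (Ac *\<^sub>v (transpose_mat Ac *\<^sub>v u)) - u"
  using refl_mat[OF Ac_c AtA] unfolding RPc_def by auto
lemma RQ: "RQc \<in> carrier_mat nA nA" "transpose_mat RQc = RQc" "RQc * RQc = 1\<^sub>m nA"
    "\<And>u. u \<in> carrier_vec nA \<Longrightarrow> RQc *\<^sub>v u = 2 \<cdot>\<^sub>v (Bc *\<^sub>v (transpose_mat Bc *\<^sub>v u)) - u"
  using refl_mat[OF Bc_c BtB] unfolding RQc_def by auto

lemma Uc_eq: "Uc = RPc * RQc"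
proof -
  have "transition_mat Mh Nh = (2 \<cdot>\<^sub>m (Mh * transpose_mat Mh) - 1\<^sub>m nA) * (2 \<cdot>\<^sub>m (Nh * transpose_mat Nh) - 1\<^sub>m nA)"
    unfolding transition_mat_def using Mh_c Nh_c by simp
  moreover have "(2 \<cdot>\<^sub>m (Mh * transpose_mat Mh) - 1\<^sub>m nA) \<in> carrier_mat nA nA"
    by (rule minus_carrier_mat) simp
  moreover have "(2 \<cdot>\<^sub>m (Nh * transpose_mat Nh) - 1\<^sub>m nA) \<in> carrier_mat nA nA"
    by (rule minus_carrier_mat) simp
  ultimately show ?thesis using cmat_mult cmat_refl[OF Mh_c] cmat_refl[OF Nh_c]
    unfolding RPc_def RQc_def by metis
qed

lemma Uc_c: "Uc \<in> carrier_mat nA nA" unfolding Uc_eq using RP RQ by simp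

lemma Uv: "v \<in> carrier_vec nA \<Longrightarrow> Uc *\<^sub>v v = 2 \<cdot>\<^sub>v (Ac *\<^sub>v (transpose_mat Ac *\<^sub>v (2 \<cdot>\<^sub>v (Bc *\<^sub>v (transpose_mat Bc *\<^sub>v v)) - v))) - (2 \<cdot>\<^sub>v (Bc *\<^sub>v (transpose_mat Bc *\<^sub>v v)) - v)"
proof -
  assume v: "v \<in> carrier_vec nA"
  have BtC: "transpose_mat Bc \<in> carrier_mat nV nA" using Bc_c by simp
  have q: "Bc *\<^sub>v (transpose_mat Bc *\<^sub>v v) \<in> carrier_vec nA"
    by (intro mult_mat_vec_carrier[OF Bc_c] mult_mat_vec_carrier[OF BtC v])
  have u: "2 \<cdot>\<^sub>v (Bc *\<^sub>v (transpose_mat Bc *\<^sub>v v)) - v \<in> carrier_vec nA"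
    using q v by simp
  show ?thesis unfolding Uc_eq using RP(1) RQ(1) v RQ(4)[OF v] RP(4)[OF u] by simp
qed

lemma UtU: "transpose_mat Uc * Uc = 1\<^sub>m nA"
  unfolding Uc_eq by (rule orth_prod) (use RP RQ in auto)

lemma Uadj: "v \<in> carrier_vec nA \<Longrightarrow> w \<in> carrier_vec nA \<Longrightarrow> (Uc *\<^sub>v v) \<bullet>c w = v \<bullet>c (transpose_mat Uc *\<^sub>v w)"
proof -
  assume v: "v \<in> carrier_vec nA" and w: "w \<in> carrier_vec nA"
  have T: "transition_mat Mh Nh \<in> carrier_mat nA nA" using Uc_c unfolding cmat_def by simp
  show ?thesis using adj_real[OF T v w] cmat_transpose unfolding cmat_def by metis
qed

lemma Kv: "y \<in> carrier_vec nV \<Longrightarrow> Kc *\<^sub>v y = transpose_mat Bc *\<^sub>v (Ac *\<^sub>v (transpose_mat Ac *\<^sub>v (Bc *\<^sub>v y)))"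
proof -
  assume y: "y \<in> carrier_vec nV"
  have t: "transpose_mat Chc = transpose_mat Ac * Bc" unfolding Chc_eq using Ac_c Bc_c
    by (simp add: transpose_mult[of _ nV nA])
  have c1: "transpose_mat Bc * Ac \<in> carrier_mat nV nF" and c2: "transpose_mat Ac * Bc \<in> carrier_mat nF nV"
    using Ac_c Bc_c by auto
  have "Kc *\<^sub>v y = (transpose_mat Bc * Ac) *\<^sub>v ((transpose_mat Ac * Bc) *\<^sub>v y)"
    unfolding t unfolding Chc_eq by (rule assoc_mult_mat_vec[OF c1 c2 y])
  thus ?thesis using Ac_c Bc_c y by simp
qed

lemma ChTv: "y \<in> carrier_vec nV \<Longrightarrow> transpose_mat Chc *\<^sub>v y = transpose_mat Ac *\<^sub>v (Bc *\<^sub>v y)"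
proof -
  assume y: "y \<in> carrier_vec nV"
  have t: "transpose_mat Chc = transpose_mat Ac * Bc" unfolding Chc_eq using Ac_c Bc_c
    by (simp add: transpose_mult[of _ nV nA])
  show ?thesis unfolding t using Ac_c Bc_c y by simp
qed

lemma part2:
  assumes quad: "lam^2 + (2 - 4*mu)*lam + 1 = 0" and mu0: "mu \<noteq> 0" and lam1: "lam \<noteq> 1" and c1: "c1 = 2*mu"
  shows "bij_betw (\<lambda>y. c1 \<cdot>\<^sub>v (Bc *\<^sub>v y) - (lam + 1) \<cdot>\<^sub>v (Ac *\<^sub>v (transpose_mat Chc *\<^sub>v y)))
           (eigenspace Kc mu) (eigenspace Uc lam)"
  by (rule part2_abstract[OF Ac_c Bc_c AtA BtB Uc_c Uv Kc_c Kv _ ChTv quad mu0 lam1 c1])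
     (use Chc_c in simp_all)

lemma UtU_v: "v \<in> carrier_vec nA \<Longrightarrow> transpose_mat Uc *\<^sub>v (Uc *\<^sub>v v) = v"
  using assoc_mult_mat_vec[of "transpose_mat Uc" nA nA Uc nA v] Uc_c UtU by simp

lemma eigU_unit: assumes "eigenvalue Uc lam" shows "lam * cnj lam = 1"
proof -
  from assms obtain v where v: "v \<in> carrier_vec nA" "v \<noteq> 0\<^sub>v nA" "Uc *\<^sub>v v = lam \<cdot>\<^sub>v v"
    unfolding eigenvalue_def eigenvector_def using Uc_c by auto
  have Uvc: "Uc *\<^sub>v v \<in> carrier_vec nA" using Uc_c v(1) by simp
  have "(Uc *\<^sub>v v) \<bullet>c (Uc *\<^sub>v v) = v \<bullet>c v" using Uadj[OF v(1) Uvc] UtU_v[OF v(1)] by simp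
  moreover have "(Uc *\<^sub>v v) \<bullet>c (Uc *\<^sub>v v) = lam * cnj lam * (v \<bullet>c v)"
    unfolding v(3) using v(1) by (simp add: cscalar_smult_left cscalar_smult_right)
  moreover have "v \<bullet>c v \<noteq> 0" using conjugate_square_eq_0_vec[OF v(1)] v(2) by simp
  ultimately show ?thesis by simp
qed

lemma Ut_eig: assumes u: "lam * cnj lam = 1" and v: "v \<in> carrier_vec nA" and Uv: "Uc *\<^sub>v v = lam \<cdot>\<^sub>v v"
  shows "transpose_mat Uc *\<^sub>v v = cnj lam \<cdot>\<^sub>v v"
proof -
  have UtC: "transpose_mat Uc \<in> carrier_mat nA nA" using Uc_c by simp
  define w where "w = transpose_mat Uc *\<^sub>v v"
  have wc: "w \<in> carrier_vec nA" unfolding w_def using UtC v by simp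
  have lw: "lam \<cdot>\<^sub>v w = v" using UtU_v[OF v] Uv UtC v unfolding w_def by (simp add: mult_mat_vec)
  have e: "lam * w $ i = v $ i" if "i < nA" for i
  proof -
    have "(lam \<cdot>\<^sub>v w) $ i = v $ i" using lw by simp
    thus ?thesis using that wc by simp
  qed
  show ?thesis unfolding w_def[symmetric]
  proof (rule eq_vecI)
    fix i assume "i < dim_vec (cnj lam \<cdot>\<^sub>v v)"
    hence i: "i < nA" using v by simp
    have "cnj lam * (lam * w $ i) = cnj lam * v $ i" using e[OF i] by simp
    hence "w $ i = cnj lam * v $ i" using u by (simp add: mult.assoc[symmetric] mult.commute)
    thus "w $ i = (cnj lam \<cdot>\<^sub>v v) $ i" using i v by simp
  qed (use wc v in simp)
qed

lemma multU: assumes "eigenvalue Uc lam" shows "eig_mult Uc lam = kernel_dim (char_matrix Uc lam)"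
proof -
  have UtC: "transpose_mat Uc \<in> carrier_mat nA nA" using Uc_c by simp
  have u: "lam * cnj lam = 1" by (rule eigU_unit[OF assms])
  show ?thesis unfolding eig_mult_def
    by (rule order_char_poly_eq_kernel_dim[OF Uc_c normal_kernel_sq[OF Uc_c UtC Uadj Ut_eig[OF u]]])
qed

lemma Kp_eq: "Kp = cmat (transpose_mat Chr * Chr)"
  using cmat_mult[of "transpose_mat Chr" nF nV Chr nF] Chr_c cmat_transpose by simp

lemma multKp: assumes mu: "cnj mu = mu"
  shows "Polynomial.order mu (char_poly Kp) = kernel_dim (char_matrix Kp mu)"
proof -
  have X: "transpose_mat Chr * Chr \<in> carrier_mat nF nF" using Chr_c by simp
  have XT: "transpose_mat (transpose_mat Chr * Chr) = transpose_mat Chr * Chr"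
    using Chr_c by (simp add: transpose_mult[of _ nF nV])
  have adj: "(Kp *\<^sub>v v) \<bullet>c w = v \<bullet>c (Kp *\<^sub>v w)" if "v \<in> carrier_vec nF" "w \<in> carrier_vec nF" for v w
    using adj_real[OF X that] XT unfolding Kp_eq unfolding cmat_def by simp
  have ev: "Kp *\<^sub>v v = cnj mu \<cdot>\<^sub>v v" if "v \<in> carrier_vec nF" "Kp *\<^sub>v v = mu \<cdot>\<^sub>v v" for v
    unfolding mu by (rule that(2))
  show ?thesis
    by (rule order_char_poly_eq_kernel_dim[OF Kp_c normal_kernel_sq[OF Kp_c Kp_c adj ev]])
qed

lemma Kp0: "kernel_dim (char_matrix Kp 0) = nF - vec_space.rank nV Cm"
proof -
  have X: "transpose_mat Chr * Chr \<in> carrier_mat nF nF" using Chr_c by simp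
  have "char_matrix Kp 0 = Kp" unfolding char_matrix_def using Kp_c by (intro eq_matI) auto
  hence "kernel_dim (char_matrix Kp 0) = kernel_dim (transpose_mat Chr * Chr)"
    unfolding Kp_eq unfolding cmat_def using kernel_dim_cmat[OF X] by simp
  also have "\<dots> = kernel_dim Chr" using real_kernel_XtX[OF Chr_c] Chr_c by (intro kernel_dim_cong) auto
  also have "\<dots> = kernel_dim Cm" by (rule kernel_dim_Chr)
  also have "\<dots> = nF - vec_space.rank nV Cm" using rank_nullity_mat[OF Cm_c] by simp
  finally show ?thesis .
qed

lemma Kp1: "kernel_dim (char_matrix Kp 1) = 1"
proof -
  have X: "transpose_mat Chr * Chr \<in> carrier_mat nF nF" using Chr_c by simp
  have CX: "char_matrix (transpose_mat Chr * Chr) 1 \<in> carrier_mat nF nF" using X by simp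
  have "char_matrix Kp 1 = map_mat complex_of_real (char_matrix (transpose_mat Chr * Chr) 1)"
    unfolding Kp_eq unfolding cmat_def char_matrix_def using X by (intro eq_matI) auto
  hence "kernel_dim (char_matrix Kp 1) = kernel_dim (char_matrix (transpose_mat Chr * Chr) 1)"
    using kernel_dim_cmat[OF CX] by simp
  thus ?thesis using one_eig by simp
qed

lemma dim_link:
  assumes quad: "lam^2 + (2 - 4*mu)*lam + 1 = 0" and mu0: "mu \<noteq> 0" and lam1: "lam \<noteq> 1"
  shows "kernel_dim (char_matrix Uc lam) = kernel_dim (char_matrix Kp mu)"
proof -
  define F where "F y = (2*mu) \<cdot>\<^sub>v (Bc *\<^sub>v y) - (lam + 1) \<cdot>\<^sub>v (Ac *\<^sub>v (transpose_mat Chc *\<^sub>v y))" for y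
  have bij: "bij_betw F (eigenspace Kc mu) (eigenspace Uc lam)"
    unfolding F_def by (rule part2[OF quad mu0 lam1 refl])
  have ChtC: "transpose_mat Chc \<in> carrier_mat nF nV" using Chc_c by simp
  have kK: "mat_kernel (char_matrix Kc mu) \<subseteq> carrier_vec nV"
    using mat_kernel_char_matrix[OF Kc_c] by auto
  have Flin: "F (x + y) = F x + F y" if "x \<in> carrier_vec nV" "y \<in> carrier_vec nV" for x y
  proof -
    have e1: "Bc *\<^sub>v (x + y) = Bc *\<^sub>v x + Bc *\<^sub>v y" using Bc_c that by (simp add: mult_add_distrib_mat_vec)
    have e2: "Ac *\<^sub>v (transpose_mat Chc *\<^sub>v (x + y)) = Ac *\<^sub>v (transpose_mat Chc *\<^sub>v x) + Ac *\<^sub>v (transpose_mat Chc *\<^sub>v y)"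
      using Ac_c ChtC that by (simp add: mult_add_distrib_mat_vec)
    have d: "dim_vec (Bc *\<^sub>v x) = nA" "dim_vec (Bc *\<^sub>v y) = nA"
      "dim_vec (Ac *\<^sub>v (transpose_mat Chc *\<^sub>v x)) = nA" "dim_vec (Ac *\<^sub>v (transpose_mat Chc *\<^sub>v y)) = nA"
      "dim_row Ac = nA" "dim_row Bc = nA"
      using Ac_c Bc_c by auto
    show ?thesis unfolding F_def e1 e2 by (intro eq_vecI) (simp_all add: d algebra_simps)
  qed
  have Fsm: "F (c \<cdot>\<^sub>v x) = c \<cdot>\<^sub>v F x" if "x \<in> carrier_vec nV" for c x
  proof -
    have e1: "Bc *\<^sub>v (c \<cdot>\<^sub>v x) = c \<cdot>\<^sub>v (Bc *\<^sub>v x)" using Bc_c that by (simp add: mult_mat_vec)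
    have e2: "Ac *\<^sub>v (transpose_mat Chc *\<^sub>v (c \<cdot>\<^sub>v x)) = c \<cdot>\<^sub>v (Ac *\<^sub>v (transpose_mat Chc *\<^sub>v x))"
      using Ac_c ChtC that by (simp add: mult_mat_vec)
    have d: "dim_vec (Bc *\<^sub>v x) = nA" "dim_vec (Ac *\<^sub>v (transpose_mat Chc *\<^sub>v x)) = nA"
      "dim_row Ac = nA" "dim_row Bc = nA"
      using Ac_c Bc_c by auto
    show ?thesis unfolding F_def e1 e2 by (intro eq_vecI) (simp_all add: d algebra_simps)
  qed
  have "kernel_dim (char_matrix Kc mu) = kernel_dim (char_matrix Uc lam)"
  proof (rule kernel_dim_bij[OF char_matrix_closed[OF Kc_c] char_matrix_closed[OF Uc_c], where T = F])
    show "F (x + y) = F x + F y" if "x \<in> mat_kernel (char_matrix Kc mu)" "y \<in> mat_kernel (char_matrix Kc mu)" for x y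
      using Flin that kK by blast
    show "F (c \<cdot>\<^sub>v x) = c \<cdot>\<^sub>v F x" if "x \<in> mat_kernel (char_matrix Kc mu)" for c x
      using Fsm that kK by blast
    show "bij_betw F (mat_kernel (char_matrix Kc mu)) (mat_kernel (char_matrix Uc lam))"
      using bij unfolding eigenspace_char[OF Kc_c] eigenspace_char[OF Uc_c] .
  qed
  also have "kernel_dim (char_matrix Kc mu) = kernel_dim (char_matrix Kp mu)"
    by (rule kernel_XXt[OF Chc_c mu0])
  finally show ?thesis by simp
qed

end


lemma quad_cis:
  fixes mu theta :: real
  assumes "cos theta = 2 * mu - 1"
  shows "(cis theta)^2 + (2 - 4 * complex_of_real mu) * cis theta + 1 = 0"
proof -
  have mu: "mu = (cos theta + 1) / 2" using assms by simp
  have s: "sin theta * sin theta = 1 - cos theta * cos theta"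
    using sin_cos_squared_add[of theta] by (simp add: power2_eq_square)
  show ?thesis unfolding mu by (simp add: complex_eq_iff power2_eq_square algebra_simps s)
qed

lemma quad_unit:
  fixes lam :: complex
  assumes "lam * cnj lam = 1"
  shows "lam^2 + (2 - 4 * complex_of_real ((1 + Re lam) / 2)) * lam + 1 = 0"
proof -
  have h: "lam + cnj lam = 2 * complex_of_real (Re lam)" using complex_add_cnj[of lam] by simp
  have e: "2 - 4 * complex_of_real ((1 + Re lam) / 2) = - (lam + cnj lam)"
    unfolding h by (simp add: field_simps)
  show ?thesis unfolding e using assms by (simp add: power2_eq_square algebra_simps)
qed

lemma quad_root:
  fixes b :: complex
  shows "((- b + csqrt (b^2 - 4)) / 2)^2 + b * ((- b + csqrt (b^2 - 4)) / 2) + 1 = 0"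
proof -
  define s where "s = csqrt (b^2 - 4)"
  have s2: "s^2 = b^2 - 4" unfolding s_def by simp
  have s2': "s * s + 4 = b * b" using s2 by (simp add: power2_eq_square)
  have r: "8 + s * (s * 2) - b * (b * 2) = 2 * (s * s + 4 - b * b)" by (simp add: algebra_simps)
  have "8 + s * (s * 2) = b * (b * 2)" using r s2' by simp
  thus ?thesis unfolding s_def[symmetric] by (simp add: power2_eq_square field_simps)
qed

context emb
begin

lemma unit_re:
  assumes u: "lam * cnj lam = 1" shows "Re lam ^ 2 + Im lam ^ 2 = 1"
proof -
  have "complex_of_real (Re lam ^ 2 + Im lam ^ 2) = lam * cnj lam" by (simp add: complex_mult_cnj)
  thus ?thesis using u by (metis of_real_eq_1_iff)
qed

lemma S_prop:
  assumes ev: "eigenvalue Uc lam" and im: "Im lam \<noteq> 0"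
  shows "eigenvalue Kp (complex_of_real ((1 + Re lam) / 2))"
    "eig_mult Uc lam = Polynomial.order (complex_of_real ((1 + Re lam) / 2)) (char_poly Kp)"
proof -
  let ?m = "complex_of_real ((1 + Re lam) / 2)"
  have u: "lam * cnj lam = 1" by (rule eigU_unit[OF ev])
  have n: "Re lam ^ 2 + Im lam ^ 2 = 1" by (rule unit_re[OF u])
  have "Im lam ^ 2 > 0" using im by simp
  hence "Re lam ^ 2 < 1" using n by linarith
  hence "\<bar>Re lam\<bar> < 1" by (simp add: abs_square_less_1)
  hence r: "-1 < Re lam" "Re lam < 1" by auto
  have "(1 + Re lam) / 2 \<noteq> 0" using r by simp
  hence m0: "?m \<noteq> 0" by (metis of_real_eq_0_iff)
  have l1: "lam \<noteq> 1" using im by auto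
  have dl: "kernel_dim (char_matrix Uc lam) = kernel_dim (char_matrix Kp ?m)"
    by (rule dim_link[OF quad_unit[OF u] m0 l1])
  have "kernel_dim (char_matrix Uc lam) > 0" using eigenvalue_kernel_dim[OF Uc_c] ev by simp
  thus "eigenvalue Kp ?m" using dl eigenvalue_kernel_dim[OF Kp_c] by simp
  have "eig_mult Uc lam = kernel_dim (char_matrix Uc lam)" by (rule multU[OF ev])
  also have "\<dots> = Polynomial.order ?m (char_poly Kp)" unfolding dl by (rule multKp[symmetric]) simp
  finally show "eig_mult Uc lam = Polynomial.order ?m (char_poly Kp)" .
qed

lemma S'_real:
  assumes ev: "eigenvalue Kp mu" and m0: "mu \<noteq> 0" and m1: "mu \<noteq> 1"
  shows "\<exists>r. mu = complex_of_real r \<and> 0 < r \<and> r < 1"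
proof -
  define b where "b = 2 - 4 * mu"
  define lam where "lam = (- b + csqrt (b^2 - 4)) / 2"
  have quad: "lam^2 + (2 - 4*mu) * lam + 1 = 0" using quad_root[of b] unfolding lam_def b_def by simp
  have l1: "lam \<noteq> 1"
  proof
    assume "lam = 1"
    with quad have "4 - 4 * mu = 0" by (simp add: algebra_simps)
    thus False using m1 by simp
  qed
  have dl: "kernel_dim (char_matrix Uc lam) = kernel_dim (char_matrix Kp mu)"
    by (rule dim_link[OF quad m0 l1])
  have "kernel_dim (char_matrix Kp mu) > 0" using eigenvalue_kernel_dim[OF Kp_c] ev by simp
  hence evU: "eigenvalue Uc lam" using dl eigenvalue_kernel_dim[OF Uc_c] by simp
  have u: "lam * cnj lam = 1" by (rule eigU_unit[OF evU])
  have A: "4 * mu * lam = lam^2 + 2 * lam + 1" using quad by (simp add: algebra_simps)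
  have B: "4 * mu * (lam * cnj lam) = (lam^2 + 2 * lam + 1) * cnj lam" by (simp add: A[symmetric] mult.assoc)
  have C: "(lam^2 + 2 * lam + 1) * cnj lam = lam * (lam * cnj lam) + 2 * (lam * cnj lam) + cnj lam"
    by (simp add: power2_eq_square algebra_simps)
  have "4 * mu = lam + cnj lam + 2" using B C u by simp
  also have "lam + cnj lam = complex_of_real (2 * Re lam)" by (rule complex_add_cnj)
  finally have h4: "4 * mu = complex_of_real (2 * Re lam) + 2" .
  have "mu = (complex_of_real (2 * Re lam) + 2) / 4" using h4 by (simp add: field_simps)
  also have "\<dots> = complex_of_real ((1 + Re lam) / 2)" by (simp add: field_simps)
  finally have mu_eq: "mu = complex_of_real ((1 + Re lam) / 2)" .
  have n: "Re lam ^ 2 + Im lam ^ 2 = 1" by (rule unit_re[OF u])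
  hence "Re lam ^ 2 \<le> 1" by (metis le_add_same_cancel1 zero_le_power2)
  hence "\<bar>Re lam\<bar> \<le> 1" by (simp add: abs_square_le_1)
  moreover have "(1 + Re lam) / 2 \<noteq> 0"
  proof
    assume h: "(1 + Re lam) / 2 = 0"
    have "mu = 0" using mu_eq unfolding h by simp
    thus False using m0 by simp
  qed
  moreover have "(1 + Re lam) / 2 \<noteq> 1"
  proof
    assume h: "(1 + Re lam) / 2 = 1"
    have "mu = 1" using mu_eq unfolding h by simp
    thus False using m1 by simp
  qed
  ultimately have "0 < (1 + Re lam) / 2" "(1 + Re lam) / 2 < 1" by auto
  thus ?thesis using mu_eq by blast
qed

lemma S'_back:
  assumes ev: "eigenvalue Kp (complex_of_real r)" and r: "0 < r" "r < 1"
  defines "theta \<equiv> arccos (2 * r - 1)"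
  shows "eigenvalue Uc (cis theta)" "Im (cis theta) > 0" "(1 + Re (cis theta)) / 2 = r"
    "eigenvalue Uc (cis (- theta))" "Im (cis (- theta)) < 0" "(1 + Re (cis (- theta))) / 2 = r"
proof -
  have c: "cos theta = 2 * r - 1" unfolding theta_def using r by (simp add: cos_arccos)
  have "0 < theta \<and> theta < pi" unfolding theta_def using r by (intro arccos_lt_bounded) auto
  hence th: "0 < theta" "theta < pi" by auto
  have sn: "sin theta > 0" using th by (simp add: sin_gt_zero)
  have m0: "complex_of_real r \<noteq> 0" using r by simp
  have kp: "kernel_dim (char_matrix Kp (complex_of_real r)) > 0" using eigenvalue_kernel_dim[OF Kp_c] ev by simp
  have l1: "cis theta \<noteq> 1" using sn by (auto simp: complex_eq_iff)
  have "kernel_dim (char_matrix Uc (cis theta)) = kernel_dim (char_matrix Kp (complex_of_real r))"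
    by (rule dim_link[OF quad_cis[OF c] m0 l1])
  thus "eigenvalue Uc (cis theta)" using kp eigenvalue_kernel_dim[OF Uc_c] by simp
  show "Im (cis theta) > 0" using sn by simp
  show "(1 + Re (cis theta)) / 2 = r" using c by simp
  have c': "cos (- theta) = 2 * r - 1" using c by simp
  have l1': "cis (- theta) \<noteq> 1" using sn by (auto simp: complex_eq_iff)
  have "kernel_dim (char_matrix Uc (cis (- theta))) = kernel_dim (char_matrix Kp (complex_of_real r))"
    by (rule dim_link[OF quad_cis[OF c'] m0 l1'])
  thus "eigenvalue Uc (cis (- theta))" using kp eigenvalue_kernel_dim[OF Uc_c] by simp
  show "Im (cis (- theta)) < 0" using sn by simp
  show "(1 + Re (cis (- theta))) / 2 = r" using c by simp
qed

lemma S_bounds: assumes ev: "eigenvalue Uc lam" and im: "Im lam \<noteq> 0"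
  shows "-1 < Re lam" "Re lam < 1"
proof -
  have n: "Re lam ^ 2 + Im lam ^ 2 = 1" by (rule unit_re[OF eigU_unit[OF ev]])
  have "Im lam ^ 2 > 0" using im by simp
  hence "Re lam ^ 2 < 1" using n by linarith
  hence "\<bar>Re lam\<bar> < 1" by (simp add: abs_square_less_1)
  thus "-1 < Re lam" "Re lam < 1" by auto
qed

lemma part1: "(\<Sum>k\<in>{k. eigenvalue Uc k \<and> Im k \<noteq> 0}. eig_mult Uc k) = 2 * vec_space.rank nV Cm - 2"
proof -
  define Sp where "Sp = {k. eigenvalue Uc k \<and> Im k > 0}"
  define Sm where "Sm = {k. eigenvalue Uc k \<and> Im k < 0}"
  define S' where "S' = {mu. eigenvalue Kp mu \<and> mu \<noteq> 0 \<and> mu \<noteq> 1}"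
  define g where "g k = complex_of_real ((1 + Re k) / 2)" for k
  define ord where "ord mu = Polynomial.order mu (char_poly Kp)" for mu
  have finU: "finite {k. eigenvalue Uc k}" by (rule sum_order_eigenvalues(1)[OF Uc_c])
  have finp: "finite Sp" unfolding Sp_def by (rule finite_subset[OF _ finU]) auto
  have finm: "finite Sm" unfolding Sm_def by (rule finite_subset[OF _ finU]) auto
  have Sun: "{k. eigenvalue Uc k \<and> Im k \<noteq> 0} = Sp \<union> Sm" unfolding Sp_def Sm_def by auto
  have disj: "Sp \<inter> Sm = {}" unfolding Sp_def Sm_def by auto
  have gS': "g k \<in> S'" if "eigenvalue Uc k" "Im k \<noteq> 0" for k
  proof -
    have "-1 < Re k" "Re k < 1" using S_bounds[OF that] by auto
    hence "(1 + Re k) / 2 \<noteq> 0" "(1 + Re k) / 2 \<noteq> 1" by auto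
    hence "g k \<noteq> 0" "g k \<noteq> 1" unfolding g_def by (metis of_real_eq_0_iff, metis of_real_eq_1_iff)
    thus ?thesis using S_prop(1)[OF that] unfolding S'_def g_def by auto
  qed
  have meq: "eig_mult Uc k = ord (g k)" if "eigenvalue Uc k" "Im k \<noteq> 0" for k
    using S_prop(2)[OF that] unfolding ord_def g_def .
  have greal: "\<exists>r. mu = complex_of_real r \<and> 0 < r \<and> r < 1" if "mu \<in> S'" for mu
    using S'_real that unfolding S'_def by auto
  have ginj: "k1 = k2" if "eigenvalue Uc k1" "eigenvalue Uc k2" "g k1 = g k2"
      "(Im k1 > 0 \<and> Im k2 > 0) \<or> (Im k1 < 0 \<and> Im k2 < 0)" for k1 k2
  proof -
    have re: "Re k1 = Re k2" using that(3) unfolding g_def by simp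
    have "Im k1 ^ 2 = Im k2 ^ 2"
      using unit_re[OF eigU_unit[OF that(1)]] unit_re[OF eigU_unit[OF that(2)]] re by simp
    hence "Im k1 = Im k2" using that(4) by (metis abs_of_neg abs_of_pos power2_abs power2_eq_iff_nonneg
          abs_ge_zero neg_equal_iff_equal)
    thus ?thesis using re by (simp add: complex_eq_iff)
  qed
  have bp: "bij_betw g Sp S'"
  proof (unfold bij_betw_def, intro conjI)
    show "inj_on g Sp" unfolding Sp_def by (intro inj_onI) (use ginj in auto)
    show "g ` Sp = S'"
    proof
      show "g ` Sp \<subseteq> S'" unfolding Sp_def using gS' by auto
      show "S' \<subseteq> g ` Sp"
      proof
        fix mu assume mu: "mu \<in> S'"
        then obtain r where r: "mu = complex_of_real r" "0 < r" "r < 1" using greal by blast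
        have ev: "eigenvalue Kp (complex_of_real r)" using mu r unfolding S'_def by simp
        note b = S'_back[OF ev r(2,3)]
        show "mu \<in> g ` Sp" unfolding Sp_def g_def
          by (rule image_eqI[of _ _ "cis (arccos (2 * r - 1))"]) (use b r in auto)
      qed
    qed
  qed
  have bm: "bij_betw g Sm S'"
  proof (unfold bij_betw_def, intro conjI)
    show "inj_on g Sm" unfolding Sm_def by (intro inj_onI) (use ginj in auto)
    show "g ` Sm = S'"
    proof
      show "g ` Sm \<subseteq> S'" unfolding Sm_def using gS' by auto
      show "S' \<subseteq> g ` Sm"
      proof
        fix mu assume mu: "mu \<in> S'"
        then obtain r where r: "mu = complex_of_real r" "0 < r" "r < 1" using greal by blast
        have ev: "eigenvalue Kp (complex_of_real r)" using mu r unfolding S'_def by simp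
        note b = S'_back[OF ev r(2,3)]
        show "mu \<in> g ` Sm" unfolding Sm_def g_def
          by (rule image_eqI[of _ _ "cis (- arccos (2 * r - 1))"]) (use b r in auto)
      qed
    qed
  qed
  have sp: "(\<Sum>k\<in>Sp. eig_mult Uc k) = (\<Sum>mu\<in>S'. ord mu)"
  proof -
    have "(\<Sum>k\<in>Sp. eig_mult Uc k) = (\<Sum>k\<in>Sp. ord (g k))"
      by (rule sum.cong[OF refl]) (use meq in \<open>auto simp: Sp_def\<close>)
    also have "\<dots> = (\<Sum>mu\<in>S'. ord mu)" by (rule sum.reindex_bij_betw[OF bp])
    finally show ?thesis .
  qed
  have sm: "(\<Sum>k\<in>Sm. eig_mult Uc k) = (\<Sum>mu\<in>S'. ord mu)"
  proof -
    have "(\<Sum>k\<in>Sm. eig_mult Uc k) = (\<Sum>k\<in>Sm. ord (g k))"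
      by (rule sum.cong[OF refl]) (use meq in \<open>auto simp: Sm_def\<close>)
    also have "\<dots> = (\<Sum>mu\<in>S'. ord mu)" by (rule sum.reindex_bij_betw[OF bm])
    finally show ?thesis .
  qed
  define T where "T = {mu. eigenvalue Kp mu}"
  have finT: "finite T" unfolding T_def by (rule sum_order_eigenvalues(1)[OF Kp_c])
  have sumT: "(\<Sum>mu\<in>T. ord mu) = nF" unfolding T_def ord_def by (rule sum_order_eigenvalues(2)[OF Kp_c])
  have S'T: "S' \<subseteq> T" unfolding S'_def T_def by auto
  have split: "(\<Sum>mu\<in>T. ord mu) = (\<Sum>mu\<in>T - S'. ord mu) + (\<Sum>mu\<in>S'. ord mu)"
    by (rule sum.subset_diff[OF S'T finT])
  have rest: "(\<Sum>mu\<in>T - S'. ord mu) = (\<Sum>mu\<in>{0,1}. ord mu)"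
  proof (rule sum.mono_neutral_left)
    show "finite {0::complex, 1}" by simp
    show "T - S' \<subseteq> {0, 1}" unfolding T_def S'_def by auto
    show "\<forall>i\<in>{0, 1} - (T - S'). ord i = 0"
    proof
      fix i assume i: "i \<in> {0::complex, 1} - (T - S')"
      hence "\<not> eigenvalue Kp i" unfolding T_def S'_def by auto
      hence "poly (char_poly Kp) i \<noteq> 0" using eigenvalue_root_char_poly[OF Kp_c] by simp
      thus "ord i = 0" unfolding ord_def by (rule order_0I)
    qed
  qed
  have o0: "ord 0 = nF - vec_space.rank nV Cm" unfolding ord_def using multKp[of 0] Kp0 by simp
  have o1: "ord 1 = 1" unfolding ord_def using multKp[of 1] Kp1 by simp
  have rk: "vec_space.rank nV Cm + kernel_dim Cm = nF" by (rule rank_nullity_mat[OF Cm_c])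
  have "(\<Sum>mu\<in>S'. ord mu) + (nF - vec_space.rank nV Cm) + 1 = nF"
    using sumT split rest o0 o1 by simp
  hence sS: "(\<Sum>mu\<in>S'. ord mu) = vec_space.rank nV Cm - 1" using rk by linarith
  have "(\<Sum>k\<in>{k. eigenvalue Uc k \<and> Im k \<noteq> 0}. eig_mult Uc k) = (\<Sum>k\<in>Sp. eig_mult Uc k) + (\<Sum>k\<in>Sm. eig_mult Uc k)"
    unfolding Sun by (rule sum.union_disjoint[OF finp finm disj])
  also have "\<dots> = 2 * (vec_space.rank nV Cm - 1)" unfolding sp sm sS by simp
  finally show ?thesis by simp
qed

end

theorem theorem3p4:
  fixes V :: "'v set" and E :: "'v \<Rightarrow> 'v \<Rightarrow> bool" and \<rho> :: "'v \<times> 'v \<Rightarrow> 'v \<times> 'v"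
    and as :: "('v \<times> 'v) list" and vs :: "'v list" and fs :: "('v \<times> 'v) set list"
  assumes graph: "simple_graph V E" and conn: "connected_graph V E"
    and rot: "rotation_system E \<rho>" and circ: "circular E \<rho>"
    and as: "distinct as" "set as = arcs E"
    and vs: "distinct vs" "set vs = V"
    and fs: "distinct fs" "set fs = faces E \<rho>"
  defines "M \<equiv> arc_face_mat as fs" and "N \<equiv> arc_tail_mat as vs"
    and "C \<equiv> vertex_face_mat vs fs"
  defines "Mh \<equiv> normalize_cols M" and "Nh \<equiv> normalize_cols N"
  defines "U \<equiv> cmat (transition_mat Mh Nh)"
    and "Ch \<equiv> cmat (transpose_mat Nh * Mh)"
  shows "(\<Sum>k\<in>{k. eigenvalue U k \<and> Im k \<noteq> 0}. eig_mult U k)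
           = 2 * vec_space.rank (length vs) C - 2
    \<and> (\<forall>\<mu> \<theta>. eigenvalue (Ch * transpose_mat Ch) (complex_of_real \<mu>) \<longrightarrow> 0 < \<mu> \<longrightarrow> \<mu> < 1 \<longrightarrow>
          cos \<theta> = 2 * \<mu> - 1 \<longrightarrow>
          (
          bij_betw (\<lambda>y. complex_of_real (cos \<theta> + 1) \<cdot>\<^sub>v (cmat Nh *\<^sub>v y)
                        - (cis \<theta> + 1) \<cdot>\<^sub>v (cmat Mh *\<^sub>v (transpose_mat Ch *\<^sub>v y)))
            (eigenspace (Ch * transpose_mat Ch) (complex_of_real \<mu>))
            (eigenspace U (cis \<theta>))
          \<and> bij_betw (\<lambda>y. complex_of_real (cos \<theta> + 1) \<cdot>\<^sub>v (cmat Nh *\<^sub>v y)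
                        - (cis (- \<theta>) + 1) \<cdot>\<^sub>v (cmat Mh *\<^sub>v (transpose_mat Ch *\<^sub>v y)))
            (eigenspace (Ch * transpose_mat Ch) (complex_of_real \<mu>))
            (eigenspace U (cis (- \<theta>)))))"
proof -
  interpret emb V E \<rho> as vs fs
    by (unfold_locales) (use graph conn rot circ as vs fs in auto)
  show ?thesis
    unfolding U_def Ch_def unfolding Mh_def Nh_def unfolding M_def N_def C_def
  proof (intro conjI allI impI)
    show "(\<Sum>k\<in>{k. eigenvalue Uc k \<and> Im k \<noteq> 0}. eig_mult Uc k) = 2 * vec_space.rank nV Cm - 2"
      by (rule part1)
  next
    fix mu theta :: real
    assume mu0: "0 < mu" and mu1: "mu < 1" and c: "cos theta = 2 * mu - 1"
    have m0: "complex_of_real mu \<noteq> 0" using mu0 by simp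
    have c1: "complex_of_real (cos theta + 1) = 2 * complex_of_real mu" using c by simp
    have l1: "cis theta \<noteq> 1"
    proof
      assume "cis theta = 1"
      hence "cos theta = 1" by (simp add: complex_eq_iff)
      thus False using c mu1 by simp
    qed
    have c': "cos (- theta) = 2 * mu - 1" using c by simp
    have l1': "cis (- theta) \<noteq> 1"
    proof
      assume "cis (- theta) = 1"
      hence "cos theta = 1" by (simp add: complex_eq_iff)
      thus False using c mu1 by simp
    qed
    show "bij_betw (\<lambda>y. complex_of_real (cos theta + 1) \<cdot>\<^sub>v (Bc *\<^sub>v y) - (cis theta + 1) \<cdot>\<^sub>v (Ac *\<^sub>v (transpose_mat Chc *\<^sub>v y)))
            (eigenspace Kc (complex_of_real mu)) (eigenspace Uc (cis theta))"
      by (rule part2[OF quad_cis[OF c] m0 l1 c1])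
    show "bij_betw (\<lambda>y. complex_of_real (cos theta + 1) \<cdot>\<^sub>v (Bc *\<^sub>v y) - (cis (- theta) + 1) \<cdot>\<^sub>v (Ac *\<^sub>v (transpose_mat Chc *\<^sub>v y)))
            (eigenspace Kc (complex_of_real mu)) (eigenspace Uc (cis (- theta)))"
      by (rule part2[OF quad_cis[OF c'] m0 l1' c1])
  qed
qed

end
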